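(* Let $m\ge1$ and let $\pi$ be an $m$-colored permutation of length $n$. For each color $i\in\{0,\dots,m-1\}$ let $\lambda^{(i)}(\pi)=(\lambda^{(i)}_1\ge\lambda^{(i)}_2\ge\cdots)$ be the partition associated (via the Robinson–Schensted correspondence) to the subsequence of $\pi$ consisting of the entries of color $i$, with $\lambda^{(i)}_j=0$ for $j$ beyond its length. Then for each $k\ge1$, $\lambda_k(\pi)-k$ equals the $k$-th largest element of the multiset $\{m(\lambda^{(i)}_j(\pi)-j)+i:\ 0\le i\le m-1,\ j\ge1\}$. Moreover $(\lambda_1(\pi),\lambda_2(\pi),\dots)$ is a partition of $mn$.
   Context: An $m$-colored permutation of length $n$ is a permutation of $\{1,\dots,n\}$ in which each entry is assigned a color in $\{0,1,\dots,m-1\}$. A monochromatic increasing subsequence is an increasing subsequence all of whose entries have the same color; empty subsequences are allowed but still carry a color. Given a choice of $k$ pairwise disjoint monochromatic increasing subsequences, of which $k_i$ have color $i$ (so $k=\sum_ik_i$), whose union $S$ has $l$ entries, its score is $ml+\binom{k+1}{2}+\sum_{0\le i\le m-1}\big(ik_i-m\binom{k_i+1}{2}\big)$. Let $l_k(\pi)$ be the maximum score over all such choices of $k$ monochromatic increasing subsequences ($l_0(\pi)=0$), and $\lambda_k(\pi)=l_k(\pi)-l_{k-1}(\pi)$. *)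

theory Defs
  imports Main
begin

text \<open>An m-colored permutation of length n, in one-line notation: w is the list
  (pi(1),...,pi(n)) (positions 0..n-1), and c!p is the color of the entry at position p.\<close>
definition colored_perm :: "nat \<Rightarrow> nat \<Rightarrow> nat list \<Rightarrow> nat list \<Rightarrow> bool" where
  "colored_perm m n w c \<longleftrightarrow> length w = n \<and> length c = n \<and> distinct w \<and> set w = {1..n}
     \<and> (\<forall>p<n. c ! p < m)"

text \<open>A set S of positions forms a monochromatic increasing subsequence of color col
  (the empty set is allowed and still carries a color).\<close>
definition mono_incr :: "nat list \<Rightarrow> nat list \<Rightarrow> nat \<Rightarrow> nat set \<Rightarrow> bool" where
  "mono_incr w c col S \<longleftrightarrow> S \<subseteq> {..<length w} \<and> (\<forall>p\<in>S. c ! p = col)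
     \<and> (\<forall>p\<in>S. \<forall>q\<in>S. p < q \<longrightarrow> w ! p < w ! q)"

definition choices :: "nat \<Rightarrow> nat list \<Rightarrow> nat list \<Rightarrow> nat \<Rightarrow> (nat \<times> nat set) list set" where
  "choices m w c k = {L. length L = k
     \<and> (\<forall>a<k. fst (L ! a) < m \<and> mono_incr w c (fst (L ! a)) (snd (L ! a)))
     \<and> (\<forall>a<k. \<forall>b<k. a \<noteq> b \<longrightarrow> snd (L ! a) \<inter> snd (L ! b) = {})}"

definition num_color :: "(nat \<times> nat set) list \<Rightarrow> nat \<Rightarrow> nat" where
  "num_color L i = length (filter (\<lambda>x. fst x = i) L)"

definition score :: "nat \<Rightarrow> (nat \<times> nat set) list \<Rightarrow> int" where
  "score m L = int m * int (card (\<Union> (snd ` set L))) + int ((length L + 1) choose 2)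
     + (\<Sum>i<m. int i * int (num_color L i) - int m * int ((num_color L i + 1) choose 2))"

definition l_val :: "nat \<Rightarrow> nat list \<Rightarrow> nat list \<Rightarrow> nat \<Rightarrow> int" where
  "l_val m w c k = Max (score m ` choices m w c k)"

definition lam :: "nat \<Rightarrow> nat list \<Rightarrow> nat list \<Rightarrow> nat \<Rightarrow> int" where
  "lam m w c k = l_val m w c k - l_val m w c (k - 1)"

fun row_insert :: "nat \<Rightarrow> nat list \<Rightarrow> nat list \<times> nat option" where
  "row_insert x [] = ([x], None)"
| "row_insert x (y # ys) = (if x < y then (x # ys, Some y)
      else (let (r, b) = row_insert x ys in (y # r, b)))"

fun tab_insert :: "nat \<Rightarrow> nat list list \<Rightarrow> nat list list" where
  "tab_insert x [] = [[x]]"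
| "tab_insert x (r # rs) = (case row_insert x r of
      (r', None) \<Rightarrow> r' # rs
    | (r', Some y) \<Rightarrow> r' # tab_insert y rs)"

definition rs_tableau :: "nat list \<Rightarrow> nat list list" where
  "rs_tableau v = foldl (\<lambda>T x. tab_insert x T) [] v"

definition rs_shape :: "nat list \<Rightarrow> nat list" where
  "rs_shape v = map length (rs_tableau v)"

definition part :: "nat list \<Rightarrow> nat \<Rightarrow> nat" where
  "part sh j = (if 1 \<le> j \<and> j \<le> length sh then sh ! (j - 1) else 0)"

definition color_word :: "nat list \<Rightarrow> nat list \<Rightarrow> nat \<Rightarrow> nat list" where
  "color_word w c i = [w ! p. p \<leftarrow> [0..<length w], c ! p = i]"

text \<open>x is the k-th largest element of the multiset {f a : a in I} (with multiplicity).\<close>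
definition kth_largest :: "'a set \<Rightarrow> ('a \<Rightarrow> int) \<Rightarrow> nat \<Rightarrow> int \<Rightarrow> bool" where
  "kth_largest I f k x \<longleftrightarrow> finite {a\<in>I. f a \<ge> x} \<and> card {a\<in>I. f a > x} < k \<and> k \<le> card {a\<in>I. f a \<ge> x}"

definition is_partition_of :: "(nat \<Rightarrow> int) \<Rightarrow> nat \<Rightarrow> bool" where
  "is_partition_of f N \<longleftrightarrow> (\<forall>k\<ge>1. 0 \<le> f k \<and> f (Suc k) \<le> f k)
     \<and> (\<exists>K. (\<forall>k>K. f k = 0) \<and> (\<Sum>k=1..K. f k) = int N)"

end

theory Submission
  imports Defs
begin

definition valid :: "nat list \<Rightarrow> nat set \<Rightarrow> nat set \<Rightarrow> (nat \<Rightarrow> nat) \<Rightarrow> bool" where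
"valid v A S f \<longleftrightarrow> S \<subseteq> {..<length v} \<and> f ` S \<subseteq> A \<and> (\<forall>p\<in>S. \<forall>q\<in>S. p < q \<and> f p = f q \<longrightarrow> v!p < v!q)"

definition gtr :: "nat list \<Rightarrow> nat list \<Rightarrow> bool" where
"gtr u v \<longleftrightarrow> (\<forall>A S f. valid u A S f \<longrightarrow> (\<exists>S' f'. valid v A S' f' \<and> card S' = card S))"

lemma gtr_refl: "gtr u u" unfolding gtr_def by blast

lemma gtr_trans: "gtr u v \<Longrightarrow> gtr v w \<Longrightarrow> gtr u w"
  unfolding gtr_def by metis

definition sw :: "nat \<Rightarrow> nat \<Rightarrow> nat" where
"sw q r = (if r = q then Suc q else if r = Suc q then q else r)"

lemma sw_sw[simp]: "sw q (sw q r) = r" by (simp add: sw_def)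
lemma inj_sw: "inj (sw q)" by (metis injI sw_sw)

lemma swap_valid:
  assumes len: "length v = length u" and q: "Suc q < length u"
  and vq: "v!q = u!(Suc q)" "v!(Suc q) = u!q" and oth: "\<And>r. r \<noteq> q \<Longrightarrow> r \<noteq> Suc q \<Longrightarrow> v!r = u!r"
  and val: "valid u A S f" and nsame: "\<not> (q \<in> S \<and> Suc q \<in> S \<and> f q = f (Suc q))"
  shows "valid v A (sw q ` S) (f \<circ> sw q)"
proof -
  have vsw: "v ! (sw q a) = u ! a" for a using vq oth by (auto simp: sw_def)
  have lt: "a < b" if "sw q a < sw q b" "\<not> (a = q \<and> b = Suc q)" "\<not> (a = Suc q \<and> b = q)" for a b
    using that by (auto simp: sw_def split: if_splits)
  show ?thesis unfolding valid_def
  proof (intro conjI)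
    show "sw q ` S \<subseteq> {..<length v}" using val q len unfolding valid_def by (auto simp: sw_def)
    show "(f \<circ> sw q) ` sw q ` S \<subseteq> A" using val unfolding valid_def by (auto simp: image_iff)
    show "\<forall>p\<in>sw q ` S. \<forall>r\<in>sw q ` S. p < r \<and> (f \<circ> sw q) p = (f \<circ> sw q) r \<longrightarrow> v ! p < v ! r"
    proof (intro ballI impI)
      fix p r assume "p \<in> sw q ` S" "r \<in> sw q ` S" and h: "p < r \<and> (f \<circ> sw q) p = (f \<circ> sw q) r"
      then obtain a b where ab: "a \<in> S" "b \<in> S" "p = sw q a" "r = sw q b" by auto
      have fab: "f a = f b" using h ab by simp
      have n1: "\<not> (a = q \<and> b = Suc q)" "\<not> (a = Suc q \<and> b = q)" using nsame ab fab by auto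
      have "a < b" using lt[of a b] h ab n1 by auto
      then have "u!a < u!b" using val ab fab unfolding valid_def by blast
      then show "v ! p < v ! r" using ab vsw by simp
    qed
  qed
qed

lemma card_sw: "card (sw q ` S) = card S"
  by (meson card_image inj_on_subset inj_sw subset_UNIV)

lemma valid_insert:
  assumes "valid v A S f" "P < length v" "l \<in> A" "P \<notin> S"
    "\<And>b. b \<in> S \<Longrightarrow> b < P \<Longrightarrow> f b = l \<Longrightarrow> v!b < v!P"
    "\<And>b. b \<in> S \<Longrightarrow> P < b \<Longrightarrow> f b = l \<Longrightarrow> v!P < v!b"
  shows "valid v A (insert P S) (f(P := l))"
  using assms unfolding valid_def by (auto split: if_splits)

lemma valid_subset: "valid v A S f \<Longrightarrow> S' \<subseteq> S \<Longrightarrow> valid v A S' f"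
  unfolding valid_def by blast

lemma valid_finite: "valid v A S f \<Longrightarrow> finite S"
  unfolding valid_def using finite_subset by blast

inductive kstep :: "nat list \<Rightarrow> nat list \<Rightarrow> bool" where
  k1: "x < y \<Longrightarrow> y < z \<Longrightarrow> kstep (p @ [y,x,z] @ s) (p @ [y,z,x] @ s)"
| k2: "x < y \<Longrightarrow> y < z \<Longrightarrow> kstep (p @ [x,z,y] @ s) (p @ [z,x,y] @ s)"

lemma nth3:
  "(p @ a # b # d # s) ! length p = a"
  "(p @ a # b # d # s) ! Suc (length p) = b"
  "(p @ a # b # d # s) ! Suc (Suc (length p)) = d"
  by (auto simp: nth_append)

lemma nth3o: "r \<noteq> length p \<Longrightarrow> r \<noteq> Suc (length p) \<Longrightarrow> r \<noteq> Suc (Suc (length p)) \<Longrightarrow>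
  (p @ a # b # d # s) ! r = (p @ a' # b' # d' # s) ! r"
proof -
  assume h: "r \<noteq> length p" "r \<noteq> Suc (length p)" "r \<noteq> Suc (Suc (length p))"
  show ?thesis
  proof (cases "r < length p")
    case True then show ?thesis by (simp add: nth_append)
  next
    case False
    then have "r \<ge> length p + 3" using h by auto
    then obtain d0 where "r = length p + 3 + d0" by (metis le_add_diff_inverse)
    then show ?thesis by (simp add: nth_append)
  qed
qed

lemma k1_easy:
  assumes "x < y" "y < z"
  shows "gtr (p @ [y,z,x] @ s) (p @ [y,x,z] @ s)"
  unfolding gtr_def
proof (intro allI impI)
  fix A S f assume val: "valid (p @ [y,z,x] @ s) A S f"
  let ?P = "length p"
  have ns: "\<not> (Suc ?P \<in> S \<and> Suc (Suc ?P) \<in> S \<and> f (Suc ?P) = f (Suc (Suc ?P)))"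
  proof
    assume "Suc ?P \<in> S \<and> Suc (Suc ?P) \<in> S \<and> f (Suc ?P) = f (Suc (Suc ?P))"
    then have "(p @ [y,z,x] @ s)!(Suc ?P) < (p @ [y,z,x] @ s)!(Suc (Suc ?P))"
      using val unfolding valid_def by blast
    then show False using assms by (simp add: nth3)
  qed
  show "\<exists>S' f'. valid (p @ [y,x,z] @ s) A S' f' \<and> card S' = card S"
  proof (intro exI conjI)
    show "valid (p @ [y,x,z] @ s) A (sw (Suc ?P) ` S) (f \<circ> sw (Suc ?P))"
    proof (rule swap_valid[OF _ _ _ _ _ val ns])
      fix r assume "r \<noteq> Suc ?P" "r \<noteq> Suc (Suc ?P)"
      then show "(p @ [y,x,z] @ s) ! r = (p @ [y,z,x] @ s) ! r"
        by (cases "r = ?P") (simp_all add: nth3 nth3o)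
    qed (simp_all add: nth3)
    show "card (sw (Suc ?P) ` S) = card S" by (rule card_sw)
  qed
qed

lemma k2_easy:
  assumes "x < y" "y < z"
  shows "gtr (p @ [z,x,y] @ s) (p @ [x,z,y] @ s)"
  unfolding gtr_def
proof (intro allI impI)
  fix A S f assume val: "valid (p @ [z,x,y] @ s) A S f"
  let ?P = "length p"
  have ns: "\<not> (?P \<in> S \<and> Suc ?P \<in> S \<and> f ?P = f (Suc ?P))"
  proof
    assume "?P \<in> S \<and> Suc ?P \<in> S \<and> f ?P = f (Suc ?P)"
    then have "(p @ [z,x,y] @ s)!?P < (p @ [z,x,y] @ s)!(Suc ?P)"
      using val unfolding valid_def by blast
    then show False using assms by (simp add: nth3)
  qed
  show "\<exists>S' f'. valid (p @ [x,z,y] @ s) A S' f' \<and> card S' = card S"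
  proof (intro exI conjI)
    show "valid (p @ [x,z,y] @ s) A (sw ?P ` S) (f \<circ> sw ?P)"
    proof (rule swap_valid[OF _ _ _ _ _ val ns])
      fix r assume "r \<noteq> ?P" "r \<noteq> Suc ?P"
      then show "(p @ [x,z,y] @ s) ! r = (p @ [z,x,y] @ s) ! r"
        by (cases "r = Suc (Suc ?P)") (simp_all add: nth3 nth3o)
    qed (simp_all add: nth3)
    show "card (sw ?P ` S) = card S" by (rule card_sw)
  qed
qed

lemma k1_hard:
  assumes xy: "x < y" and yz: "y < z"
  shows "gtr (p @ [y,x,z] @ s) (p @ [y,z,x] @ s)"
  unfolding gtr_def
proof (intro allI impI)
  fix A S f assume val: "valid (p @ [y,x,z] @ s) A S f"
  let ?P = "length p"
  let ?u = "p @ [y,x,z] @ s" and ?v = "p @ [y,z,x] @ s"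
  have uP: "?u ! ?P = y" "?u ! Suc ?P = x" "?u ! Suc (Suc ?P) = z" by (simp_all add: nth3)
  have vP: "?v ! ?P = y" "?v ! Suc ?P = z" "?v ! Suc (Suc ?P) = x" by (simp_all add: nth3)
  have vu: "?v ! r = ?u ! r" if "r \<noteq> Suc ?P" "r \<noteq> Suc (Suc ?P)" for r
    using that by (cases "r = ?P") (simp_all add: nth3 nth3o)
  have gen: "?u!a < ?u!b" if "a \<in> S" "b \<in> S" "a < b" "f a = f b" for a b
    using val that unfolding valid_def by blast
  have fin: "finite S" using val by (rule valid_finite)
  have Su: "S \<subseteq> {..<length ?u}" and fA: "f ` S \<subseteq> A" using val unfolding valid_def by auto
  have swv: "valid ?v A (sw (Suc ?P) ` S0) (f \<circ> sw (Suc ?P))"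
    if "S0 \<subseteq> S" "\<not> (Suc ?P \<in> S0 \<and> Suc (Suc ?P) \<in> S0 \<and> f (Suc ?P) = f (Suc (Suc ?P)))" for S0
  proof (rule swap_valid[OF _ _ _ _ _ valid_subset[OF val that(1)] that(2)])
    fix r assume "r \<noteq> Suc ?P" "r \<noteq> Suc (Suc ?P)"
    then show "?v ! r = ?u ! r" by (rule vu)
  qed (simp_all add: nth3)
  show "\<exists>S' f'. valid ?v A S' f' \<and> card S' = card S"
  proof (cases "Suc ?P \<in> S \<and> Suc (Suc ?P) \<in> S \<and> f (Suc ?P) = f (Suc (Suc ?P))")
    case False
    then show ?thesis using swv[of S] card_sw by blast
  next
    case True
    define l where "l = f (Suc ?P)"
    have lA: "l \<in> A" using True fA l_def by auto
    show ?thesis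
    proof (cases "?P \<in> S")
      case False
      let ?S0 = "S - {Suc ?P}"
      have v0: "valid ?v A (sw (Suc ?P) ` ?S0) (f \<circ> sw (Suc ?P))" by (rule swv) auto
      have notin: "?P \<notin> sw (Suc ?P) ` ?S0" using False by (auto simp: sw_def split: if_splits)
      have v1: "valid ?v A (insert ?P (sw (Suc ?P) ` ?S0)) ((f \<circ> sw (Suc ?P))(?P := l))"
      proof (rule valid_insert[OF v0 _ lA notin])
        show "?P < length ?v" by simp
      next
        fix b assume b: "b \<in> sw (Suc ?P) ` ?S0" "b < ?P" "(f \<circ> sw (Suc ?P)) b = l"
        then have b0: "b \<in> S" "f b = l" by (auto simp: sw_def split: if_splits)
        have "?u!b < ?u!(Suc ?P)" using gen[OF b0(1) _ _ ] True b(2) b0(2) l_def by simp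
        then show "?v!b < ?v!?P" using vu[of b] b(2) uP vP xy by simp
      next
        fix b assume b: "b \<in> sw (Suc ?P) ` ?S0" "?P < b" "(f \<circ> sw (Suc ?P)) b = l"
        show "?v!?P < ?v!b"
        proof (cases "b = Suc ?P")
          case True then show ?thesis using vP yz by simp
        next
          case False
          then have b2: "b \<noteq> Suc (Suc ?P)" using b by (auto simp: sw_def split: if_splits)
          then have b0: "b \<in> S" "f b = l" "Suc (Suc ?P) < b" using b False by (auto simp: sw_def split: if_splits)
          have "?u!(Suc (Suc ?P)) < ?u!b" using gen[OF _ b0(1) b0(3)] True b0(2) l_def by simp
          then show ?thesis using vu[of b] False b2 uP vP yz by simp
        qed
      qed
      have "card (insert ?P (sw (Suc ?P) ` ?S0)) = Suc (card ?S0)"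
        using notin fin card_sw by simp
      also have "\<dots> = card S" using True fin
        by (metis card_Suc_Diff1)
      finally show ?thesis using v1 by blast
    next
      case PS: True
      define l2 where "l2 = f ?P"
      have "?u!?P < ?u!(Suc ?P)" if "l2 = l" using gen[of ?P "Suc ?P"] PS True that l_def l2_def by simp
      then have ll2: "l2 \<noteq> l" using uP xy by auto
      define f' where "f' r = (if r = Suc ?P then l2 else if r = Suc (Suc ?P) then l
        else if Suc (Suc ?P) < r \<and> f r = l then l2 else if Suc (Suc ?P) < r \<and> f r = l2 then l else f r)" for r
      have A1: "?u!a < x" if "a \<in> S" "a < Suc ?P" "f a = l" for a
        using gen[of a "Suc ?P"] that True l_def uP by simp
      have B1: "z < ?u!b" if "b \<in> S" "Suc (Suc ?P) < b" "f b = l" for b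
        using gen[of "Suc (Suc ?P)" b] that True l_def uP by simp
      have C1: "?u!a < y" if "a \<in> S" "a < ?P" "f a = l2" for a
        using gen[of a ?P] that PS l2_def uP by simp
      have D1: "y < ?u!b" if "b \<in> S" "?P < b" "f b = l2" for b
        using gen[of ?P b] that PS l2_def uP by simp
      have "valid ?v A S f'"
        unfolding valid_def
      proof (intro conjI ballI impI)
        show "S \<subseteq> {..<length ?v}" using Su by simp
        show "f' ` S \<subseteq> A" using fA PS True unfolding f'_def l_def l2_def by auto
      next
        fix a b assume ab: "a \<in> S" "b \<in> S" "a < b \<and> f' a = f' b"
        show "?v!a < ?v!b"
        proof -
          consider "a < ?P" | "a = ?P" | "a = Suc ?P" | "a = Suc (Suc ?P)" | "Suc (Suc ?P) < a" by linarith
          then show ?thesis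
          proof cases
            case 1
            then show ?thesis using ab A1[of a] B1[of b] C1[of a] D1[of b] gen[of a b] vu[of a] vu[of b] vP xy yz ll2
              unfolding f'_def by (auto split: if_splits)
          next
            case 2
            then show ?thesis using ab A1[of a] B1[of b] C1[of a] D1[of b] gen[of a b] vu[of a] vu[of b] vP xy yz ll2 l2_def
              unfolding f'_def by (auto split: if_splits)
          next
            case 3
            then show ?thesis using ab A1[of a] B1[of b] C1[of a] D1[of b] gen[of a b] vu[of a] vu[of b] vP xy yz ll2
              unfolding f'_def by (auto split: if_splits)
          next
            case 4
            then show ?thesis using ab A1[of a] B1[of b] C1[of a] D1[of b] gen[of a b] vu[of a] vu[of b] vP xy yz ll2
              unfolding f'_def by (auto split: if_splits)
          next
            case 5
            then show ?thesis using ab A1[of a] B1[of b] C1[of a] D1[of b] gen[of a b] vu[of a] vu[of b] vP xy yz ll2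
              unfolding f'_def by (auto split: if_splits)
          qed
        qed
      qed
      then show ?thesis by blast
    qed
  qed
qed

lemma k2_hard:
  assumes xy: "x < y" and yz: "y < z"
  shows "gtr (p @ [x,z,y] @ s) (p @ [z,x,y] @ s)"
  unfolding gtr_def
proof (intro allI impI)
  fix A S f assume val: "valid (p @ [x,z,y] @ s) A S f"
  let ?P = "length p"
  let ?u = "p @ [x,z,y] @ s" and ?v = "p @ [z,x,y] @ s"
  have uP: "?u ! ?P = x" "?u ! Suc ?P = z" "?u ! Suc (Suc ?P) = y" by (simp_all add: nth3)
  have vP: "?v ! ?P = z" "?v ! Suc ?P = x" "?v ! Suc (Suc ?P) = y" by (simp_all add: nth3)
  have vu: "?v ! r = ?u ! r" if "r \<noteq> ?P" "r \<noteq> Suc ?P" for r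
    using that by (cases "r = Suc (Suc ?P)") (simp_all add: nth3 nth3o)
  have gen: "?u!a < ?u!b" if "a \<in> S" "b \<in> S" "a < b" "f a = f b" for a b
    using val that unfolding valid_def by blast
  have fin: "finite S" using val by (rule valid_finite)
  have Su: "S \<subseteq> {..<length ?u}" and fA: "f ` S \<subseteq> A" using val unfolding valid_def by auto
  have swv: "valid ?v A (sw ?P ` S0) (f \<circ> sw ?P)"
    if "S0 \<subseteq> S" "\<not> (?P \<in> S0 \<and> Suc ?P \<in> S0 \<and> f ?P = f (Suc ?P))" for S0
  proof (rule swap_valid[OF _ _ _ _ _ valid_subset[OF val that(1)] that(2)])
    fix r assume "r \<noteq> ?P" "r \<noteq> Suc ?P"
    then show "?v ! r = ?u ! r" by (rule vu)
  qed (simp_all add: nth3)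
  show "\<exists>S' f'. valid ?v A S' f' \<and> card S' = card S"
  proof (cases "?P \<in> S \<and> Suc ?P \<in> S \<and> f ?P = f (Suc ?P)")
    case False
    then show ?thesis using swv[of S] card_sw by blast
  next
    case True
    define l where "l = f ?P"
    have lA: "l \<in> A" using True fA l_def by auto
    show ?thesis
    proof (cases "Suc (Suc ?P) \<in> S")
      case False
      let ?S0 = "S - {Suc ?P}"
      have v0: "valid ?v A (sw ?P ` ?S0) (f \<circ> sw ?P)" by (rule swv) auto
      have notin: "Suc (Suc ?P) \<notin> sw ?P ` ?S0" using False by (auto simp: sw_def split: if_splits)
      have v1: "valid ?v A (insert (Suc (Suc ?P)) (sw ?P ` ?S0)) ((f \<circ> sw ?P)(Suc (Suc ?P) := l))"
      proof (rule valid_insert[OF v0 _ lA notin])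
        show "Suc (Suc ?P) < length ?v" by simp
      next
        fix b assume b: "b \<in> sw ?P ` ?S0" "b < Suc (Suc ?P)" "(f \<circ> sw ?P) b = l"
        show "?v!b < ?v!(Suc (Suc ?P))"
        proof (cases "b = Suc ?P")
          case True then show ?thesis using vP xy by simp
        next
          case False
          then have b2: "b \<noteq> ?P" using b by (auto simp: sw_def split: if_splits)
          then have b0: "b \<in> S" "f b = l" "b < ?P" using b False by (auto simp: sw_def split: if_splits)
          have "?u!b < ?u!?P" using gen[OF b0(1) _ b0(3)] True b0(2) l_def by simp
          then show ?thesis using vu[of b] False b2 uP vP xy by simp
        qed
      next
        fix b assume b: "b \<in> sw ?P ` ?S0" "Suc (Suc ?P) < b" "(f \<circ> sw ?P) b = l"
        then have b0: "b \<in> S" "f b = l" by (auto simp: sw_def split: if_splits)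
        have "?u!(Suc ?P) < ?u!b" using gen[OF _ b0(1)] True b(2) b0(2) l_def by simp
        then show "?v!(Suc (Suc ?P)) < ?v!b" using vu[of b] b(2) uP vP yz by simp
      qed
      have "card (insert (Suc (Suc ?P)) (sw ?P ` ?S0)) = Suc (card ?S0)"
        using notin fin card_sw by simp
      also have "\<dots> = card S" using True fin
        by (metis card_Suc_Diff1)
      finally show ?thesis using v1 by blast
    next
      case PS: True
      define l2 where "l2 = f (Suc (Suc ?P))"
      have "?u!(Suc ?P) < ?u!(Suc (Suc ?P))" if "l2 = l" using gen[of "Suc ?P" "Suc (Suc ?P)"] PS True that l_def l2_def by simp
      then have ll2: "l2 \<noteq> l" using uP yz by auto
      define f' where "f' r = (if r = ?P then l2 else if r = Suc ?P then l else if r = Suc (Suc ?P) then l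
        else if Suc (Suc ?P) < r \<and> f r = l then l2 else if Suc (Suc ?P) < r \<and> f r = l2 then l else f r)" for r
      have A1: "?u!a < x" if "a \<in> S" "a < ?P" "f a = l" for a
        using gen[of a ?P] that True l_def uP by simp
      have B1: "z < ?u!b" if "b \<in> S" "Suc ?P < b" "f b = l" for b
        using gen[of "Suc ?P" b] that True l_def uP by simp
      have C1: "?u!a < y" if "a \<in> S" "a < Suc (Suc ?P)" "f a = l2" for a
        using gen[of a "Suc (Suc ?P)"] that PS l2_def uP by simp
      have D1: "y < ?u!b" if "b \<in> S" "Suc (Suc ?P) < b" "f b = l2" for b
        using gen[of "Suc (Suc ?P)" b] that PS l2_def uP by simp
      have "valid ?v A S f'"
        unfolding valid_def
      proof (intro conjI ballI impI)
        show "S \<subseteq> {..<length ?v}" using Su by simp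
        show "f' ` S \<subseteq> A" using fA PS True unfolding f'_def l_def l2_def by auto
      next
        fix a b assume ab: "a \<in> S" "b \<in> S" "a < b \<and> f' a = f' b"
        show "?v!a < ?v!b"
        proof -
          consider "a < ?P" | "a = ?P" | "a = Suc ?P" | "a = Suc (Suc ?P)" | "Suc (Suc ?P) < a" by linarith
          then show ?thesis
          proof cases
            case 1
            then show ?thesis using ab A1[of a] B1[of b] C1[of a] D1[of b] gen[of a b] vu[of a] vu[of b] vP xy yz ll2
              unfolding f'_def by (auto split: if_splits)
          next
            case 2
            then show ?thesis using ab A1[of a] B1[of b] C1[of a] D1[of b] gen[of a b] vu[of a] vu[of b] vP xy yz ll2 l_def True
              unfolding f'_def by (auto split: if_splits)
          next
            case 3
            then show ?thesis using ab A1[of a] B1[of b] C1[of a] D1[of b] gen[of a b] vu[of a] vu[of b] vP xy yz ll2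
              unfolding f'_def by (auto split: if_splits)
          next
            case 4
            then show ?thesis using ab A1[of a] B1[of b] C1[of a] D1[of b] gen[of a b] vu[of a] vu[of b] vP xy yz ll2
              unfolding f'_def by (auto split: if_splits)
          next
            case 5
            then show ?thesis using ab A1[of a] B1[of b] C1[of a] D1[of b] gen[of a b] vu[of a] vu[of b] vP xy yz ll2
              unfolding f'_def by (auto split: if_splits)
          qed
        qed
      qed
      then show ?thesis by blast
    qed
  qed
qed

lemma kstep_gtr: "kstep u v \<Longrightarrow> gtr u v \<and> gtr v u"
proof (induction rule: kstep.induct)
  case (k1 x y z p s) then show ?case using k1_hard[of x y z p s] k1_easy[of x y z p s] by simp
next
  case (k2 x y z p s) then show ?case using k2_hard[of x y z p s] k2_easy[of x y z p s] by simp
qed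

definition ksim :: "nat list \<Rightarrow> nat list \<Rightarrow> bool" where
"ksim = (\<lambda>u v. kstep u v \<or> kstep v u)\<^sup>*\<^sup>*"

lemma ksim_gtr: "ksim u v \<Longrightarrow> gtr u v \<and> gtr v u"
  unfolding ksim_def
proof (induction rule: rtranclp_induct)
  case base then show ?case by (simp add: gtr_refl)
next
  case (step y z) then show ?case using kstep_gtr gtr_trans by metis
qed

lemma ksim_refl: "ksim u u" unfolding ksim_def by simp
lemma ksim_trans: "ksim u v \<Longrightarrow> ksim v w \<Longrightarrow> ksim u w" unfolding ksim_def by simp
lemma ksim_sym: "ksim u v \<Longrightarrow> ksim v u"
  unfolding ksim_def
proof (induction rule: rtranclp_induct)
  case base then show ?case by simp
next
  case (step y z)
  then have "(\<lambda>u v. kstep u v \<or> kstep v u)\<^sup>*\<^sup>* z y" by blast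
  then show ?case using step(3) by (meson rtranclp_trans)
qed

lemma kstep_ctx: "kstep u v \<Longrightarrow> kstep (a @ u @ b) (a @ v @ b)"
proof (induction rule: kstep.induct)
  case (k1 x y z p s) then show ?case using kstep.k1[of x y z "a @ p" "s @ b"] by simp
next
  case (k2 x y z p s) then show ?case using kstep.k2[of x y z "a @ p" "s @ b"] by simp
qed

lemma ksim_ctx: "ksim u v \<Longrightarrow> ksim (a @ u @ b) (a @ v @ b)"
  unfolding ksim_def
proof (induction rule: rtranclp_induct)
  case base then show ?case by simp
next
  case (step y z)
  then show ?case using kstep_ctx by (metis (mono_tags, lifting) rtranclp.simps)
qed

lemma ksim_step1: "x < y \<Longrightarrow> y < z \<Longrightarrow> ksim (p @ [y,x,z] @ s) (p @ [y,z,x] @ s)"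
  unfolding ksim_def using kstep.k1 by (simp add: r_into_rtranclp)
lemma ksim_step2: "x < y \<Longrightarrow> y < z \<Longrightarrow> ksim (p @ [x,z,y] @ s) (p @ [z,x,y] @ s)"
  unfolding ksim_def using kstep.k2 by (simp add: r_into_rtranclp)

lemma row_insert_None:
  "row_insert x r = (r', None) \<Longrightarrow> r' = r @ [x] \<and> (\<forall>e\<in>set r. \<not> x < e)"
proof (induction r arbitrary: r')
  case Nil then show ?case by simp
next
  case (Cons a r)
  then show ?case by (auto split: if_splits prod.splits)
qed

lemma row_insert_Some:
  "row_insert x r = (r', Some y) \<Longrightarrow> \<exists>u v. r = u @ y # v \<and> r' = u @ x # v \<and> (\<forall>e\<in>set u. \<not> x < e) \<and> x < y"
proof (induction r arbitrary: r')
  case Nil then show ?case by simp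
next
  case (Cons a r)
  show ?case
  proof (cases "x < a")
    case True then show ?thesis using Cons.prems by (intro exI[of _ "[]"] exI[of _ r]) auto
  next
    case False
    then obtain r1 where r1: "row_insert x r = (r1, Some y)" "r' = a # r1" using Cons.prems
      by (auto split: prod.splits)
    then obtain u v where "r = u @ y # v \<and> r1 = u @ x # v \<and> (\<forall>e\<in>set u. \<not> x < e) \<and> x < y"
      using Cons.IH by blast
    then show ?thesis using r1 False by (intro exI[of _ "a # u"] exI[of _ v]) auto
  qed
qed

lemma L1: "sorted_wrt (<) (a # v) \<Longrightarrow> x < a \<Longrightarrow> ksim (a # v @ [x]) (a # x # v)"
proof (induction v arbitrary: a)
  case Nil then show ?case by (simp add: ksim_refl)
next
  case (Cons b v)
  have ab: "a < b" using Cons.prems by simp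
  have "ksim (b # v @ [x]) (b # x # v)" using Cons ab by simp
  then have 1: "ksim (a # b # v @ [x]) (a # b # x # v)" using ksim_ctx[of _ _ "[a]" "[]"] by simp
  have "ksim ([] @ [a,x,b] @ v) ([] @ [a,b,x] @ v)" using ksim_step1[of x a b "[]" v] Cons.prems ab by simp
  then have 2: "ksim (a # b # x # v) (a # x # b # v)" using ksim_sym by simp
  show ?case using ksim_trans[OF 1 2] by simp
qed

lemma L2: "sorted_wrt (<) (u @ [b]) \<Longrightarrow> b < y \<Longrightarrow> ksim (u @ y # b # rest) (y # u @ b # rest)"
proof (induction u arbitrary: b rest rule: rev_induct)
  case Nil then show ?case by (simp add: ksim_refl)
next
  case (snoc a u)
  have ab: "a < b" and su: "sorted_wrt (<) (u @ [a])" using snoc.prems by (auto simp: sorted_wrt_append)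
  have 1: "ksim (u @ a # y # b # rest) (u @ y # a # b # rest)" using ksim_step2[of a b y u rest] ab snoc.prems by simp
  have 2: "ksim (u @ y # a # (b # rest)) (y # u @ a # (b # rest))" using snoc.IH[OF su] ab snoc.prems by simp
  show ?case using ksim_trans[OF 1 2] by simp
qed

lemma row_ksim:
  assumes "sorted_wrt (<) (u @ y # v)" "\<forall>e\<in>set u. e < x" "x < y"
  shows "ksim (u @ y # v @ [x]) (y # u @ x # v)"
proof -
  have "sorted_wrt (<) (y # v)" using assms(1) by (simp add: sorted_wrt_append)
  then have "ksim (y # v @ [x]) (y # x # v)" using L1 assms(3) by blast
  then have 1: "ksim (u @ y # v @ [x]) (u @ y # x # v)" using ksim_ctx[of _ _ u "[]"] by simp
  have "sorted_wrt (<) (u @ [x])" using assms(1,2) by (simp add: sorted_wrt_append)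
  then have 2: "ksim (u @ y # x # v) (y # u @ x # v)" using L2 assms(3) by blast
  show ?thesis using ksim_trans[OF 1 2] .
qed

definition reading :: "nat list list \<Rightarrow> nat list" where
"reading T = concat (rev T)"

lemma reading_Cons[simp]: "reading (r # rs) = reading rs @ r" by (simp add: reading_def)
lemma reading_Nil[simp]: "reading [] = []" by (simp add: reading_def)

fun tabl :: "nat list list \<Rightarrow> bool" where
  "tabl [] = True"
| "tabl (r # rs) = (r \<noteq> [] \<and> sorted_wrt (<) r \<and> tabl rs \<and>
     (case rs of [] \<Rightarrow> True | s # _ \<Rightarrow> length s \<le> length r \<and> (\<forall>d<length s. r!d < s!d)))"

lemma tab_insert_set:
  "set (reading (tab_insert x T)) = insert x (set (reading T)) \<and> length (reading (tab_insert x T)) = Suc (length (reading T))"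
proof (induction T arbitrary: x)
  case Nil then show ?case by simp
next
  case (Cons r rs)
  show ?case
  proof (cases "row_insert x r")
    case (Pair r' b)
    show ?thesis
    proof (cases b)
      case None
      then show ?thesis using Pair row_insert_None[of x r r'] by auto
    next
      case (Some y)
      then obtain u v where uv: "r = u @ y # v" "r' = u @ x # v" using Pair row_insert_Some[of x r r' y] by auto
      have "set (reading (tab_insert y rs)) = insert y (set (reading rs)) \<and> length (reading (tab_insert y rs)) = Suc (length (reading rs))"
        using Cons.IH by blast
      then show ?thesis using Pair Some uv by auto
    qed
  qed
qed

lemma row_idx_Some:
  assumes "row_insert x r = (r', Some y)" "sorted_wrt (<) r" "x \<notin> set r"
  shows "\<exists>c<length r. y = r!c \<and> r' = r[c := x] \<and> (\<forall>d<c. r!d < x) \<and> x < y"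
proof -
  obtain u v where uv: "r = u @ y # v" "r' = u @ x # v" "\<forall>e\<in>set u. \<not> x < e" "x < y"
    using row_insert_Some[OF assms(1)] by blast
  have "\<forall>e\<in>set u. e < x" using uv(3) assms(3) uv(1) by (metis Un_iff linorder_neqE_nat set_append)
  then have "\<forall>d<length u. r!d < x" using uv(1) by (simp add: nth_append)
  then show ?thesis using uv by (intro exI[of _ "length u"]) auto
qed

lemma row_idx_None:
  assumes "row_insert x r = (r', None)" "x \<notin> set r"
  shows "r' = r @ [x] \<and> (\<forall>d<length r. r!d < x)"
  using row_insert_None[OF assms(1)] assms(2) by (metis linorder_neqE_nat nth_mem)

lemma sorted_upd:
  fixes r :: "nat list"
  assumes "sorted_wrt (<) r" "c < length r" "\<forall>d<c. r!d < x" "x < r!c"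
  shows "sorted_wrt (<) (r[c := x])"
  unfolding sorted_wrt_iff_nth_less
proof (intro allI impI)
  fix i j assume ij: "i < j" "j < length (r[c := x])"
  have rij: "r!i < r!j" using assms(1) ij unfolding sorted_wrt_iff_nth_less by simp
  consider "i = c" | "j = c" | "i \<noteq> c" "j \<noteq> c" by blast
  then show "r[c := x] ! i < r[c := x] ! j"
  proof cases
    case 1
    then have "r!c < r!j" using rij by simp
    then have xj: "x < r!j" using assms(4) by linarith
    then show ?thesis using 1 ij by simp
  next
    case 2
    then show ?thesis using ij assms(3) by simp
  next
    case 3
    then show ?thesis using rij by simp
  qed
qed

lemma dom_step:
  assumes sr: "sorted_wrt (<) r" and c: "c < length r" and y: "y = r!c" and xy: "x < y"
    and bel: "\<forall>d<c. r!d < x"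
    and dm: "case rs of [] \<Rightarrow> True | s # _ \<Rightarrow> length s \<le> length r \<and> (\<forall>d<length s. r!d < s!d)"
    and ts: "tabl rs" and yn: "y \<notin> set (reading rs)"
  shows "case tab_insert y rs of [] \<Rightarrow> True | s' # _ \<Rightarrow> length s' \<le> length (r[c := x]) \<and> (\<forall>d<length s'. r[c := x]!d < s'!d)"
proof -
  have rlt: "r!d < r!e" if "d < e" "e < length r" for d e using sr that unfolding sorted_wrt_iff_nth_less by simp
  have small: "r[c := x]!d < y" if "d \<le> c" for d
  proof (cases "d = c")
    case True then show ?thesis using c xy by simp
  next
    case False then show ?thesis using that c y rlt[of d c] by simp
  qed
  have le: "r[c := x]!d \<le> r!d" if "d < length r" for d
    using xy y that by (cases "d = c") auto
  show ?thesis
  proof (cases rs)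
    case Nil
    then show ?thesis using small[of 0] c by simp
  next
    case (Cons s ss)
    have ss: "sorted_wrt (<) s" and yns: "y \<notin> set s" using ts yn Cons by auto
    have dm': "length s \<le> length r" "\<forall>d<length s. r!d < s!d" using dm Cons by auto
    show ?thesis
    proof (cases "row_insert y s")
      case (Pair s' b)
      have hd: "\<exists>tl. tab_insert y rs = s' # tl" using Pair Cons by (cases b) auto
      have goal: "length s' \<le> length (r[c := x]) \<and> (\<forall>d<length s'. r[c := x]!d < s'!d)"
      proof (cases b)
        case None
        then have sn: "s' = s @ [y]" "\<forall>d<length s. s!d < y" using row_idx_None[of y s s'] Pair yns by auto
        have ls: "length s \<le> c"
        proof (rule ccontr)
          assume "\<not> length s \<le> c"
          then have "r!c < s!c" "s!c < y" using dm' sn by auto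
          then show False using y by simp
        qed
        show ?thesis
        proof (intro conjI allI impI)
          show "length s' \<le> length (r[c := x])" using sn ls c by simp
          fix d assume d: "d < length s'"
          show "r[c := x]!d < s'!d"
          proof (cases "d < length s")
            case True
            then have "r[c := x]!d = r!d" using ls by simp
            then show ?thesis using True dm' sn by (simp add: nth_append)
          next
            case False
            then have "d = length s" using d sn by simp
            then show ?thesis using small[of d] ls sn by simp
          qed
        qed
      next
        case (Some z)
        then obtain c2 where c2: "c2 < length s" "z = s!c2" "s' = s[c2 := y]" "\<forall>d<c2. s!d < y" "y < z"
          using row_idx_Some[of y s s' z] Pair ss yns by auto
        have c2c: "c2 \<le> c"
        proof (rule ccontr)
          assume "\<not> c2 \<le> c"
          then have "c < length s" "s!c < y" using c2 by auto
          then show False using dm' y by (metis not_less_iff_gr_or_eq)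
        qed
        show ?thesis
        proof (intro conjI allI impI)
          show "length s' \<le> length (r[c := x])" using c2 dm' by simp
          fix d assume d: "d < length s'"
          show "r[c := x]!d < s'!d"
          proof (cases "d = c2")
            case True then show ?thesis using small[of d] c2c c2 by simp
          next
            case False
            then have "s'!d = s!d" using c2 by simp
            moreover have "r!d < s!d" using dm' d c2 by simp
            moreover have "d < length r" using d c2 dm' by simp
            ultimately show ?thesis using le[of d] by simp
          qed
        qed
      qed
      then show ?thesis using hd by auto
    qed
  qed
qed

lemma tab_insert_ok:
  "tabl T \<Longrightarrow> distinct (reading T) \<Longrightarrow> x \<notin> set (reading T) \<Longrightarrow>
   tabl (tab_insert x T) \<and> ksim (reading (tab_insert x T)) (reading T @ [x])"
proof (induction T arbitrary: x)
  case Nil then show ?case by (simp add: ksim_refl)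
next
  case (Cons r rs)
  have r: "r \<noteq> []" "sorted_wrt (<) r" "tabl rs"
    and dm: "case rs of [] \<Rightarrow> True | s # _ \<Rightarrow> length s \<le> length r \<and> (\<forall>d<length s. r!d < s!d)"
    using Cons.prems(1) by auto
  have xr: "x \<notin> set r" "x \<notin> set (reading rs)" using Cons.prems(3) by auto
  have dis: "distinct (reading rs)" "set (reading rs) \<inter> set r = {}" using Cons.prems(2) by auto
  show ?case
  proof (cases "row_insert x r")
    case (Pair r' b)
    show ?thesis
    proof (cases b)
      case None
      then have rn: "r' = r @ [x]" "\<forall>d<length r. r!d < x" using row_idx_None[of x r r'] Pair xr by auto
      have ti: "tab_insert x (r # rs) = (r @ [x]) # rs" using Pair None rn by simp
      have "sorted_wrt (<) (r @ [x])" using rn r(2) by (auto simp: sorted_wrt_append in_set_conv_nth)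
      moreover have "case rs of [] \<Rightarrow> True | s # _ \<Rightarrow> length s \<le> length (r @ [x]) \<and> (\<forall>d<length s. (r @ [x])!d < s!d)"
        using dm rn by (cases rs) (auto simp: nth_append)
      ultimately have "tabl ((r @ [x]) # rs)" using r by simp
      then have "tabl (tab_insert x (r # rs))" using ti by simp
      moreover have "ksim (reading (tab_insert x (r # rs))) (reading (r # rs) @ [x])"
        using ti by (simp add: ksim_refl)
      ultimately show ?thesis by blast
    next
      case (Some y)
      obtain u v where uv: "r = u @ y # v" "r' = u @ x # v" "\<forall>e\<in>set u. \<not> x < e" "x < y"
        using row_insert_Some[of x r r' y] Pair Some by blast
      have ux: "\<forall>e\<in>set u. e < x" using uv(1,3) xr(1) by (metis Un_iff linorder_neqE_nat set_append)
      obtain c where c: "c < length r" "y = r!c" "r' = r[c := x]" "\<forall>d<c. r!d < x" "x < y"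
        using row_idx_Some[of x r r' y] Pair Some r(2) xr(1) by auto
      have yn: "y \<notin> set (reading rs)" using dis uv(1) by auto
      have IH: "tabl (tab_insert y rs) \<and> ksim (reading (tab_insert y rs)) (reading rs @ [y])"
        using Cons.IH[OF r(3) dis(1) yn] .
      have ti: "tab_insert x (r # rs) = r' # tab_insert y rs" using Pair Some by simp
      have "sorted_wrt (<) (r[c := x])" using c r(2) sorted_upd by auto
      moreover have "case tab_insert y rs of [] \<Rightarrow> True | s' # _ \<Rightarrow> length s' \<le> length (r[c := x]) \<and> (\<forall>d<length s'. (r[c := x])!d < s'!d)"
        by (rule dom_step[OF r(2) c(1) c(2) c(5) c(4) dm r(3) yn])
      moreover have "r[c := x] \<noteq> []" using r(1) by simp
      ultimately have "tabl (r[c := x] # tab_insert y rs)" using IH by simp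
      then have "tabl (tab_insert x (r # rs))" using ti c(3) by simp
      moreover have "ksim (reading (tab_insert x (r # rs))) (reading (r # rs) @ [x])"
      proof -
        have A: "ksim (reading (tab_insert y rs) @ r') (reading rs @ [y] @ r')"
          using ksim_ctx[of _ _ "[]" r'] IH by fastforce
        have "ksim (u @ y # v @ [x]) (y # u @ x # v)" using row_ksim r(2) uv ux by simp
        then have B: "ksim (reading rs @ r @ [x]) (reading rs @ [y] @ r')"
          using ksim_ctx[of _ _ "reading rs" "[]"] uv by simp
        show ?thesis using ksim_trans[OF A ksim_sym[OF B]] ti by simp
      qed
      ultimately show ?thesis by blast
    qed
  qed
qed

lemma rs_ok:
  "distinct v \<Longrightarrow> tabl (rs_tableau v) \<and> set (reading (rs_tableau v)) = set v \<and>
     length (reading (rs_tableau v)) = length v \<and> ksim (reading (rs_tableau v)) v"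
proof (induction v rule: rev_induct)
  case Nil then show ?case by (simp add: rs_tableau_def ksim_refl)
next
  case (snoc x v)
  let ?T = "rs_tableau v"
  have IH: "tabl ?T" "set (reading ?T) = set v" "length (reading ?T) = length v" "ksim (reading ?T) v"
    using snoc by auto
  have xn: "x \<notin> set (reading ?T)" using snoc.prems IH(2) by simp
  have dT: "distinct (reading ?T)" using IH snoc.prems by (simp add: card_distinct distinct_card)
  have eq: "rs_tableau (v @ [x]) = tab_insert x ?T" by (simp add: rs_tableau_def)
  have 1: "tabl (tab_insert x ?T) \<and> ksim (reading (tab_insert x ?T)) (reading ?T @ [x])"
    using tab_insert_ok[OF IH(1) dT xn] .
  have 2: "ksim (reading ?T @ [x]) (v @ [x])" using ksim_ctx[OF IH(4), of "[]" "[x]"] by simp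
  show ?case using 1 2 tab_insert_set[of x ?T] IH eq ksim_trans by auto
qed

fun pos :: "nat list list \<Rightarrow> nat \<Rightarrow> nat \<Rightarrow> nat" where
  "pos [] r c = c"
| "pos (x # xs) 0 c = length (reading xs) + c"
| "pos (x # xs) (Suc r) c = pos xs r c"

definition cells :: "nat list list \<Rightarrow> (nat \<times> nat) set" where
"cells T = {(r, c). r < length T \<and> c < length (T!r)}"

lemma length_reading_ge: "r < length T \<Longrightarrow> pos T r c = pos T r 0 + c"
  by (induction T r c rule: pos.induct) auto

lemma pos_lt: "r < length T \<Longrightarrow> c < length (T!r) \<Longrightarrow> pos T r c < length (reading T) \<and> reading T ! pos T r c = T!r!c"
proof (induction T r c rule: pos.induct)
  case (1 r c) then show ?case by simp
next
  case (2 x xs c) then show ?case by (simp add: nth_append)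
next
  case (3 x xs r c) then show ?case by (simp add: nth_append)
qed

lemma pos_surj: "p < length (reading T) \<Longrightarrow> \<exists>r c. r < length T \<and> c < length (T!r) \<and> p = pos T r c"
proof (induction T arbitrary: p)
  case Nil then show ?case by simp
next
  case (Cons x xs)
  show ?case
  proof (cases "p < length (reading xs)")
    case True
    then obtain r c where "r < length xs" "c < length (xs!r)" "p = pos xs r c" using Cons.IH by blast
    then show ?thesis by (intro exI[of _ "Suc r"] exI[of _ c]) auto
  next
    case False
    then show ?thesis using Cons.prems by (intro exI[of _ 0] exI[of _ "p - length (reading xs)"]) auto
  qed
qed

lemma pos_rows: "r < r' \<Longrightarrow> r' < length T \<Longrightarrow> c < length (T!r) \<Longrightarrow> c' < length (T!r') \<Longrightarrow> pos T r' c' < pos T r c"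
proof (induction T arbitrary: r r')
  case Nil then show ?case by simp
next
  case (Cons x xs)
  show ?case
  proof (cases r)
    case 0
    then obtain r1 where r1: "r' = Suc r1" using Cons.prems by (cases r') auto
    then have "pos xs r1 c' < length (reading xs)" using pos_lt[of r1 xs c'] Cons.prems by simp
    then show ?thesis using 0 r1 by simp
  next
    case (Suc r0)
    then obtain r1 where r1: "r' = Suc r1" using Cons.prems by (cases r') auto
    then show ?thesis using Cons.IH[of r0 r1] Cons.prems Suc by simp
  qed
qed

lemma pos_inj: "inj_on (\<lambda>(r, c). pos T r c) (cells T)"
proof (rule inj_onI, clarify)
  fix r c r' c' assume a: "(r, c) \<in> cells T" "(r', c') \<in> cells T" "pos T r c = pos T r' c'"
  have "r = r'"
  proof (rule ccontr)
    assume "r \<noteq> r'"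
    then consider "r < r'" | "r' < r" by linarith
    then show False using pos_rows a unfolding cells_def by (cases; fastforce)
  qed
  moreover have "r < length T" using a unfolding cells_def by auto
  ultimately have "pos T r c = pos T r 0 + c" "pos T r c' = pos T r 0 + c'"
    using length_reading_ge[of r T] by blast+
  then show "r = r' \<and> c = c'" using a(3) \<open>r = r'\<close> by simp
qed

lemma tabl_row: "tabl T \<Longrightarrow> r < length T \<Longrightarrow> sorted_wrt (<) (T!r)"
  by (induction T arbitrary: r) (auto simp: nth_Cons split: nat.splits)

lemma tabl_col: "tabl T \<Longrightarrow> r < r' \<Longrightarrow> r' < length T \<Longrightarrow> c < length (T!r') \<Longrightarrow> c < length (T!r) \<and> T!r!c < T!r'!c"
proof (induction T arbitrary: r r')
  case Nil then show ?case by simp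
next
  case (Cons a rs)
  obtain r1 where r1: "r' = Suc r1" using Cons.prems by (cases r') auto
  then obtain s ss where rs: "rs = s # ss" using Cons.prems by (cases rs) auto
  have dm: "length s \<le> length a" "\<forall>d<length s. a!d < s!d" using Cons.prems(1) rs by auto
  show ?case
  proof (cases r)
    case 0
    show ?thesis
    proof (cases r1)
      case 0 then show ?thesis using dm r1 rs Cons.prems \<open>r = 0\<close> by auto
    next
      case (Suc r2)
      have "c < length (rs!0) \<and> rs!0!c < rs!r1!c" using Cons.IH[of 0 r1] Cons.prems r1 Suc by simp
      then show ?thesis using dm rs r1 \<open>r = 0\<close> by auto
    qed
  next
    case (Suc r0)
    then show ?thesis using Cons.IH[of r0 r1] Cons.prems r1 by simp
  qed
qed

lemma tabl_len: "tabl T \<Longrightarrow> r \<le> r' \<Longrightarrow> r' < length T \<Longrightarrow> length (T!r') \<le> length (T!r)"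
proof -
  assume a: "tabl T" "r \<le> r'" "r' < length T"
  show ?thesis
  proof (cases "r = r'")
    case False
    then have "r < r'" using a by simp
    have "c < length (T!r)" if "c < length (T!r')" for c using tabl_col[OF a(1) \<open>r < r'\<close> a(3) that] by simp
    then show ?thesis by (meson leI less_irrefl_nat)
  qed simp
qed

lemma card_cells_rows: "card {(r, c). r < t \<and> r < length T \<and> c < length (T!r)} = (\<Sum>r<min t (length T). length (T!r))"
proof -
  have "{(r, c). r < t \<and> r < length T \<and> c < length (T!r)} = Sigma {..<min t (length T)} (\<lambda>r. {..<length (T!r)})"
    by auto
  then show ?thesis by (simp add: card_SigmaI)
qed

lemma down_closed: "finite X \<Longrightarrow> (\<And>a b. b \<in> X \<Longrightarrow> a \<le> b \<Longrightarrow> a \<in> X) \<Longrightarrow> X = {..<card X}"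
proof (cases "X = {}")
  case False
  assume fin: "finite X" and dc: "\<And>a b. b \<in> X \<Longrightarrow> a \<le> b \<Longrightarrow> a \<in> X"
  have M: "Max X \<in> X" using fin False by simp
  have "X = {..Max X}" using fin dc[OF M] by (auto intro: Max_ge)
  then show ?thesis by (metis card_atMost lessThan_Suc_atMost)
qed simp

lemma card_by_cols:
  fixes W :: nat and X :: "('a \<times> nat) set"
  assumes "finite X" "X \<subseteq> {(r, c). c < W}"
  shows "card X = (\<Sum>c<W. card {r. (r, c) \<in> X})"
proof -
  have eq: "X = (\<lambda>(c, r). (r, c)) ` (SIGMA c:{..<W}. {r. (r, c) \<in> X})" using assms(2) by auto
  have inj: "inj_on (\<lambda>(c, r). (r, c)) (SIGMA c:{..<W}. {r. (r, c) \<in> X})" by (auto simp: inj_on_def)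
  have fin: "finite {r. (r, c) \<in> X}" for c
  proof -
    have "{r. (r, c) \<in> X} \<subseteq> fst ` X" by force
    then show ?thesis using assms(1) finite_subset by blast
  qed
  have "card X = card (SIGMA c:{..<W}. {r. (r, c) \<in> X})" using eq inj card_image by metis
  also have "\<dots> = (\<Sum>c<W. card {r. (r, c) \<in> X})" by (rule card_SigmaI) (auto simp: fin)
  finally show ?thesis .
qed

lemma tab_upper:
  assumes tT: "tabl T" and val: "valid (reading T) A S f" and fA: "finite A"
  shows "card S \<le> (\<Sum>r<min (card A) (length T). length (T!r))"
proof (cases "T = []")
  case True
  then have "S = {}" using val unfolding valid_def by simp
  then show ?thesis by simp
next
  case False
  let ?t = "card A"
  let ?W = "length (T!0)"
  let ?pos = "\<lambda>(r, c). pos T r c"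
  have gen: "reading T ! p < reading T ! q" if "p \<in> S" "q \<in> S" "p < q" "f p = f q" for p q
    using val that unfolding valid_def by blast
  define Sc where "Sc = {(r, c). r < length T \<and> c < length (T!r) \<and> pos T r c \<in> S}"
  have Sc_cells: "Sc \<subseteq> cells T" unfolding Sc_def cells_def by auto
  have Seq: "S = ?pos ` Sc"
  proof
    show "S \<subseteq> ?pos ` Sc"
    proof
      fix p assume p: "p \<in> S"
      then have "p < length (reading T)" using val unfolding valid_def by auto
      then obtain r c where "r < length T" "c < length (T!r)" "p = pos T r c" using pos_surj by blast
      then show "p \<in> ?pos ` Sc" using p unfolding Sc_def by force
    qed
  next
    show "?pos ` Sc \<subseteq> S" unfolding Sc_def by (auto split: prod.splits)
  qed
  have cW: "c < ?W" if "r < length T" "c < length (T!r)" for r c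
    using tabl_len[OF tT, of 0 r] that by simp
  have finc: "finite (cells T)"
  proof -
    have "cells T \<subseteq> {..<length T} \<times> {..<?W}"
      unfolding cells_def using cW by blast
    then show ?thesis using finite_subset by blast
  qed
  have cardS: "card S = card Sc"
    unfolding Seq by (rule card_image[OF inj_on_subset[OF pos_inj Sc_cells]])
  have finSc: "finite Sc" using finc Sc_cells finite_subset by blast
  have "card Sc = (\<Sum>c<?W. card {r. (r, c) \<in> Sc})"
  proof (rule card_by_cols[OF finSc])
    show "Sc \<subseteq> {(r, c). c < ?W}" unfolding Sc_def using cW by blast
  qed
  also have "\<dots> \<le> (\<Sum>c<?W. card {r. r < ?t \<and> r < length T \<and> c < length (T!r)})"
  proof (rule sum_mono)
    fix c assume "c \<in> {..<?W}"
    define H where "H = {r. r < length T \<and> c < length (T!r)}"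
    have finH: "finite H" unfolding H_def by simp
    have Hdc: "H = {..<card H}"
      by (rule down_closed[OF finH]) (auto simp: H_def dest: tabl_len[OF tT])
    define Col where "Col = {r. (r, c) \<in> Sc}"
    have ColH: "Col \<subseteq> H" unfolding Col_def H_def Sc_def by auto
    have inj: "inj_on (\<lambda>r. f (pos T r c)) Col"
    proof (rule inj_onI)
      fix r r' assume a: "r \<in> Col" "r' \<in> Col" "f (pos T r c) = f (pos T r' c)"
      show "r = r'"
      proof (rule ccontr)
        assume "r \<noteq> r'"
        then consider "r < r'" | "r' < r" by linarith
        then show False
        proof cases
          case 1
          have cl: "r' < length T" "c < length (T!r')" "c < length (T!r)" "r < length T"
            using a unfolding Col_def Sc_def by auto
          have lt: "pos T r' c < pos T r c" using pos_rows[OF 1 cl(1) cl(3) cl(2)] .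
          have "pos T r c \<in> S" "pos T r' c \<in> S" using a unfolding Col_def Sc_def by auto
          then have "reading T ! pos T r' c < reading T ! pos T r c"
            using gen lt a(3) by simp
          then have "T!r'!c < T!r!c" using pos_lt cl by simp
          then show False using tabl_col[OF tT 1 cl(1) cl(2)] by simp
        next
          case 2
          have cl: "r < length T" "c < length (T!r)" "c < length (T!r')" "r' < length T"
            using a unfolding Col_def Sc_def by auto
          have lt: "pos T r c < pos T r' c" using pos_rows[OF 2 cl(1) cl(3) cl(2)] .
          have "pos T r c \<in> S" "pos T r' c \<in> S" using a unfolding Col_def Sc_def by auto
          then have "reading T ! pos T r c < reading T ! pos T r' c"
            using gen lt a(3) by simp
          then have "T!r!c < T!r'!c" using pos_lt cl by simp
          then show False using tabl_col[OF tT 2 cl(1) cl(2)] by simp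
        qed
      qed
    qed
    have "(\<lambda>r. f (pos T r c)) ` Col \<subseteq> A" using val unfolding valid_def Col_def Sc_def by auto
    then have c1: "card Col \<le> ?t" using card_inj_on_le[OF inj _ fA] by blast
    have c2: "card Col \<le> card H" using ColH finH card_mono by blast
    obtain h where hH: "H = {..<h}" using Hdc by blast
    have "{r. r < ?t \<and> r < length T \<and> c < length (T!r)} = {r. r < ?t \<and> r \<in> H}" unfolding H_def by auto
    also have "\<dots> = {..<min ?t h}" unfolding hH by auto
    finally have "card {r. r < ?t \<and> r < length T \<and> c < length (T!r)} = min ?t (card H)" using hH by simp
    then show "card {r. (r, c) \<in> Sc} \<le> card {r. r < ?t \<and> r < length T \<and> c < length (T!r)}"
      using c1 c2 unfolding Col_def by simp
  qed
  also have "\<dots> = card {(r, c). r < ?t \<and> r < length T \<and> c < length (T!r)}"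
  proof -
    define Ct where "Ct = {(r, c). r < ?t \<and> r < length T \<and> c < length (T!r)}"
    have "card Ct = (\<Sum>c<?W. card {r. (r, c) \<in> Ct})"
    proof (rule card_by_cols)
      show "finite Ct" unfolding Ct_def
        by (rule finite_subset[OF _ finc]) (auto simp: cells_def)
      show "Ct \<subseteq> {(r, c). c < ?W}" unfolding Ct_def using cW by blast
    qed
    moreover have "{r. (r, c) \<in> Ct} = {r. r < ?t \<and> r < length T \<and> c < length (T!r)}" for c
      unfolding Ct_def by simp
    ultimately show ?thesis unfolding Ct_def by simp
  qed
  also have "\<dots> = (\<Sum>r<min ?t (length T). length (T!r))" by (rule card_cells_rows)
  finally show ?thesis using cardS by simp
qed

lemma tab_lower:
  assumes tT: "tabl T"
  shows "\<exists>S f. valid (reading T) {..<t} S f \<and> card S = (\<Sum>r<min t (length T). length (T!r))"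
proof -
  let ?pos = "\<lambda>(r, c). pos T r c"
  define C where "C = {(r, c). r < t \<and> r < length T \<and> c < length (T!r)}"
  define f where "f p = fst (inv_into (cells T) ?pos p)" for p
  have Cc: "C \<subseteq> cells T" unfolding C_def cells_def by auto
  have fpos: "f (pos T r c) = r" if "(r, c) \<in> cells T" for r c
  proof -
    have "inv_into (cells T) ?pos (?pos (r, c)) = (r, c)" by (rule inv_into_f_f[OF pos_inj that])
    then show ?thesis unfolding f_def by simp
  qed
  have "valid (reading T) {..<t} (?pos ` C) f"
    unfolding valid_def
  proof (intro conjI ballI impI)
    show "?pos ` C \<subseteq> {..<length (reading T)}"
    proof clarify
      fix r c assume "(r, c) \<in> C"
      then show "pos T r c < length (reading T)" using pos_lt unfolding C_def by blast
    qed
    show "f ` ?pos ` C \<subseteq> {..<t}"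
    proof clarify
      fix r c assume rc: "(r, c) \<in> C"
      then have "f (pos T r c) = r" using fpos Cc by blast
      then show "f (pos T r c) < t" using rc unfolding C_def by simp
    qed
  next
    fix p q assume pq: "p \<in> ?pos ` C" "q \<in> ?pos ` C" "p < q \<and> f p = f q"
    then obtain r c r' c' where rc: "(r, c) \<in> C" "(r', c') \<in> C" "p = pos T r c" "q = pos T r' c'" by auto
    have rc': "(r, c) \<in> cells T" "(r', c') \<in> cells T" using rc Cc by auto
    have rr: "r = r'" using fpos[OF rc'(1)] fpos[OF rc'(2)] pq rc by simp
    have rl: "r < length T" "c < length (T!r)" "c' < length (T!r)" using rc' rr unfolding cells_def by auto
    have "pos T r c = pos T r 0 + c" "pos T r c' = pos T r 0 + c'"
      using length_reading_ge[OF rl(1)] by blast+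
    then have cc: "c < c'" using pq rc rr by simp
    have "T!r!c < T!r!c'" using tabl_row[OF tT rl(1)] cc rl unfolding sorted_wrt_iff_nth_less by auto
    moreover have "reading T ! p = T!r!c" using pos_lt[OF rl(1) rl(2)] rc by simp
    moreover have "reading T ! q = T!r!c'" using pos_lt[OF rl(1) rl(3)] rc rr by simp
    ultimately show "reading T ! p < reading T ! q" by simp
  qed
  moreover have "card (?pos ` C) = card C" by (rule card_image[OF inj_on_subset[OF pos_inj Cc]])
  moreover have "card C = (\<Sum>r<min t (length T). length (T!r))" unfolding C_def by (rule card_cells_rows)
  ultimately show ?thesis by metis
qed

lemma part_sum: "(\<Sum>j=1..t. part sh j) = (\<Sum>r<min t (length sh). sh!r)"
proof (induction t)
  case 0 then show ?case by simp
next
  case (Suc t)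
  have "(\<Sum>j=1..Suc t. part sh j) = (\<Sum>j=1..t. part sh j) + part sh (Suc t)" by simp
  also have "\<dots> = (\<Sum>r<min t (length sh). sh!r) + part sh (Suc t)" using Suc by simp
  also have "\<dots> = (\<Sum>r<min (Suc t) (length sh). sh!r)"
  proof (cases "t < length sh")
    case True
    then have "min (Suc t) (length sh) = Suc t" "min t (length sh) = t" by auto
    then show ?thesis using True by (simp add: part_def)
  next
    case False
    then have "min (Suc t) (length sh) = length sh" "min t (length sh) = length sh" by auto
    then show ?thesis using False by (simp add: part_def)
  qed
  finally show ?case .
qed

lemma shape_sum: "(\<Sum>j=1..t. part (map length T) j) = (\<Sum>r<min t (length T). length (T!r))"
  using part_sum[where t=t and sh="map length T"] by simp

lemma greene_upper:
  assumes "distinct v" "valid v A S f" "finite A"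
  shows "card S \<le> (\<Sum>j=1..card A. part (rs_shape v) j)"
proof -
  let ?T = "rs_tableau v"
  have ok: "tabl ?T" "ksim (reading ?T) v" using rs_ok[OF assms(1)] by auto
  then have "gtr v (reading ?T)" using ksim_gtr by blast
  then obtain S' f' where "valid (reading ?T) A S' f'" "card S' = card S"
    using assms(2) unfolding gtr_def by blast
  then have "card S \<le> (\<Sum>r<min (card A) (length ?T). length (?T!r))"
    using tab_upper[OF ok(1) _ assms(3)] by metis
  then show ?thesis unfolding rs_shape_def shape_sum .
qed

lemma greene_lower:
  assumes "distinct v"
  shows "\<exists>S f. valid v {..<t} S f \<and> card S = (\<Sum>j=1..t. part (rs_shape v) j)"
proof -
  let ?T = "rs_tableau v"
  have ok: "tabl ?T" "ksim (reading ?T) v" using rs_ok[OF assms(1)] by auto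
  then have g: "gtr (reading ?T) v" using ksim_gtr by blast
  obtain S f where "valid (reading ?T) {..<t} S f" "card S = (\<Sum>r<min t (length ?T). length (?T!r))"
    using tab_lower[OF ok(1)] by blast
  then obtain S' f' where "valid v {..<t} S' f'" "card S' = (\<Sum>r<min t (length ?T). length (?T!r))"
    using g unfolding gtr_def by metis
  then show ?thesis unfolding rs_shape_def shape_sum by blast
qed

lemma shape_mono:
  assumes "distinct v" "1 \<le> j"
  shows "part (rs_shape v) (Suc j) \<le> part (rs_shape v) j"
proof -
  let ?T = "rs_tableau v"
  have t: "tabl ?T" using rs_ok[OF assms(1)] by auto
  show ?thesis
  proof (cases "Suc j \<le> length ?T")
    case True
    then show ?thesis using tabl_len[OF t, of "j - 1" j] assms(2) by (simp add: part_def rs_shape_def)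
  qed (simp add: part_def rs_shape_def)
qed

lemma length_reading: "length (reading T) = (\<Sum>r<length T. length (T!r))"
proof (induction T)
  case Nil then show ?case by simp
next
  case (Cons a T)
  then show ?case unfolding length_Cons sum.lessThan_Suc_shift by simp
qed

lemma tabl_len_le: "tabl T \<Longrightarrow> length T \<le> length (reading T)"
proof (induction T)
  case Nil then show ?case by simp
next
  case (Cons a T)
  then have "a \<noteq> []" by simp
  then show ?case using Cons by (cases a) auto
qed

lemma shape_total:
  assumes "distinct v" "length v \<le> N"
  shows "(\<Sum>j=1..N. part (rs_shape v) j) = length v"
proof -
  let ?T = "rs_tableau v"
  have ok: "tabl ?T" "length (reading ?T) = length v" using rs_ok[OF assms(1)] by auto
  have "length ?T \<le> N" using tabl_len_le[OF ok(1)] ok(2) assms(2) by simp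
  then have "min N (length ?T) = length ?T" by simp
  then show ?thesis unfolding rs_shape_def shape_sum using length_reading[of ?T] ok(2) by simp
qed

definition vw :: "nat list \<Rightarrow> nat list \<Rightarrow> nat \<Rightarrow> nat set \<Rightarrow> nat set \<Rightarrow> (nat \<Rightarrow> nat) \<Rightarrow> bool" where
"vw w c i A S f \<longleftrightarrow> S \<subseteq> {p. p < length w \<and> c!p = i} \<and> f ` S \<subseteq> A \<and> (\<forall>p\<in>S. \<forall>q\<in>S. p < q \<and> f p = f q \<longrightarrow> w!p < w!q)"

lemma compr_eq: "[f p. p \<leftarrow> xs, P p] = map f (filter P xs)"
  by (induction xs) auto

lemma cw_eq: "color_word w c i = map (nth w) (filter (\<lambda>p. c!p = i) [0..<length w])"
  unfolding color_word_def by (rule compr_eq)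

lemma ps_facts:
  fixes w c :: "nat list" and i :: nat
  defines "ps \<equiv> filter (\<lambda>p. c!p = i) [0..<length w]"
  shows "sorted_wrt (<) ps" "distinct ps" "set ps = {p. p < length w \<and> c!p = i}"
    "\<And>j j'. j < length ps \<Longrightarrow> j' < length ps \<Longrightarrow> ps!j < ps!j' \<longleftrightarrow> j < j'"
proof -
  show s: "sorted_wrt (<) ps" unfolding ps_def by (rule sorted_wrt_filter) simp
  show "distinct ps" unfolding ps_def by simp
  show "set ps = {p. p < length w \<and> c!p = i}" unfolding ps_def by auto
  fix j j' assume a: "j < length ps" "j' < length ps"
  have lt: "ps!a < ps!b" if "a < b" "b < length ps" for a b using s that unfolding sorted_wrt_iff_nth_less by simp
  show "ps!j < ps!j' \<longleftrightarrow> j < j'"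
  proof
    assume "ps!j < ps!j'"
    then show "j < j'" using lt[of j' j] a by (metis less_asym' linorder_neqE_nat)
  qed (use lt a in auto)
qed

lemma cw_distinct: "distinct w \<Longrightarrow> distinct (color_word w c i)"
proof -
  assume d: "distinct w"
  let ?ps = "filter (\<lambda>p. c!p = i) [0..<length w]"
  have "inj_on (nth w) (set ?ps)" by (rule inj_on_nth[OF d]) auto
  then show ?thesis unfolding cw_eq by (simp add: distinct_map)
qed

lemma vw_to_valid:
  assumes "vw w c i A S f"
  shows "\<exists>S0 f0. valid (color_word w c i) A S0 f0 \<and> card S0 = card S"
proof -
  define ps where "ps = filter (\<lambda>p. c!p = i) [0..<length w]"
  note pf = ps_facts[where w=w and c=c and i=i, folded ps_def]
  define S0 where "S0 = {j. j < length ps \<and> ps!j \<in> S}"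
  define f0 where "f0 j = f (ps!j)" for j
  have SS: "S = (nth ps) ` S0"
  proof
    show "S \<subseteq> (nth ps) ` S0"
    proof
      fix p assume p: "p \<in> S"
      then have "p \<in> set ps" using assms pf(3) unfolding vw_def by auto
      then obtain j where "j < length ps" "ps!j = p" by (auto simp: in_set_conv_nth)
      then show "p \<in> (nth ps) ` S0" using p unfolding S0_def by auto
    qed
  qed (auto simp: S0_def)
  have inj: "inj_on (nth ps) S0" by (rule inj_on_nth[OF pf(2)]) (auto simp: S0_def)
  have cw: "color_word w c i = map (nth w) ps" unfolding cw_eq ps_def ..
  have "valid (color_word w c i) A S0 f0"
    unfolding valid_def
  proof (intro conjI ballI impI)
    show "S0 \<subseteq> {..<length (color_word w c i)}" unfolding cw S0_def by auto
    show "f0 ` S0 \<subseteq> A" using assms unfolding vw_def S0_def f0_def by auto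
  next
    fix j j' assume a: "j \<in> S0" "j' \<in> S0" "j < j' \<and> f0 j = f0 j'"
    then have "ps!j < ps!j'" using pf(4) unfolding S0_def by auto
    then have "w!(ps!j) < w!(ps!j')" using assms a unfolding vw_def S0_def f0_def by auto
    then show "color_word w c i ! j < color_word w c i ! j'" using a unfolding cw S0_def by simp
  qed
  moreover have "card S0 = card S" unfolding SS using card_image[OF inj] by simp
  ultimately show ?thesis by blast
qed

lemma valid_to_vw:
  assumes "valid (color_word w c i) A S0 f0"
  shows "\<exists>S f. vw w c i A S f \<and> card S = card S0"
proof -
  define ps where "ps = filter (\<lambda>p. c!p = i) [0..<length w]"
  note pf = ps_facts[where w=w and c=c and i=i, folded ps_def]
  have cw: "color_word w c i = map (nth w) ps" unfolding cw_eq ps_def ..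
  have S0l: "S0 \<subseteq> {..<length ps}" using assms unfolding valid_def cw by auto
  have inj: "inj_on (nth ps) {..<length ps}" by (rule inj_on_nth[OF pf(2)]) auto
  define f where "f p = f0 (inv_into {..<length ps} (nth ps) p)" for p
  have fj: "f (ps!j) = f0 j" if "j < length ps" for j
    unfolding f_def using inv_into_f_f[OF inj] that by simp
  have "vw w c i A ((nth ps) ` S0) f"
    unfolding vw_def
  proof (intro conjI ballI impI)
    show "(nth ps) ` S0 \<subseteq> {p. p < length w \<and> c!p = i}"
      using S0l pf(3) nth_mem by blast
    show "f ` (nth ps) ` S0 \<subseteq> A"
    proof clarify
      fix j assume j: "j \<in> S0"
      then have "f (ps!j) = f0 j" using fj S0l by auto
      then show "f (ps!j) \<in> A" using assms j unfolding valid_def by auto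
    qed
  next
    fix p q assume a: "p \<in> (nth ps) ` S0" "q \<in> (nth ps) ` S0" "p < q \<and> f p = f q"
    then obtain j j' where jj: "j \<in> S0" "j' \<in> S0" "p = ps!j" "q = ps!j'" by auto
    have jl: "j < length ps" "j' < length ps" using jj S0l by auto
    have "j < j'" using pf(4)[OF jl] a jj by simp
    moreover have "f0 j = f0 j'" using a jj fj jl by simp
    ultimately have "color_word w c i ! j < color_word w c i ! j'" using assms jj unfolding valid_def by blast
    then show "w!p < w!q" using jj jl unfolding cw by simp
  qed
  moreover have "card ((nth ps) ` S0) = card S0" using card_image inj_on_subset[OF inj S0l] by blast
  ultimately show ?thesis by blast
qed

lemma gw_upper:
  assumes "distinct w" "vw w c i A S f" "finite A"
  shows "card S \<le> (\<Sum>j=1..card A. part (rs_shape (color_word w c i)) j)"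
proof -
  obtain S0 f0 where "valid (color_word w c i) A S0 f0" "card S0 = card S"
    using vw_to_valid[OF assms(2)] by blast
  then show ?thesis using greene_upper[OF cw_distinct[OF assms(1)] _ assms(3)] by metis
qed

lemma gw_lower:
  assumes "distinct w"
  shows "\<exists>S f. vw w c i {..<t} S f \<and> card S = (\<Sum>j=1..t. part (rs_shape (color_word w c i)) j)"
proof -
  obtain S0 f0 where "valid (color_word w c i) {..<t} S0 f0" "card S0 = (\<Sum>j=1..t. part (rs_shape (color_word w c i)) j)"
    using greene_lower[OF cw_distinct[OF assms(1)]] by blast
  then show ?thesis using valid_to_vw by metis
qed

locale CP =
  fixes m n :: nat and w c :: "nat list"
  assumes m1: "m \<ge> 1" and cp: "colored_perm m n w c"
begin

lemma basic: "length w = n" "length c = n" "distinct w" "\<And>p. p < n \<Longrightarrow> c!p < m"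
  using cp unfolding colored_perm_def by auto

definition lp :: "nat \<Rightarrow> nat \<Rightarrow> nat" where "lp i j = part (rs_shape (color_word w c i)) j"
definition val :: "nat \<times> nat \<Rightarrow> int" where
  "val = (\<lambda>(i, j). int m * (int (part (rs_shape (color_word w c i)) j) - int j) + int i)"
definition II :: "(nat \<times> nat) set" where "II = {(i, j). i < m \<and> j \<ge> 1}"

lemma val_eq: "val (i, j) = int m * (int (lp i j) - int j) + int i" by (simp add: val_def lp_def)

lemma lp_sum_le: "(\<Sum>j=1..t. lp i j) \<le> n"
proof -
  obtain S f where Sf: "vw w c i {..<t} S f" "card S = (\<Sum>j=1..t. part (rs_shape (color_word w c i)) j)"
    using gw_lower[OF basic(3)] by blast
  have "S \<subseteq> {..<n}" using Sf(1) basic(1) unfolding vw_def by auto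
  then have "card S \<le> n" by (metis card_lessThan card_mono finite_lessThan)
  then show ?thesis using Sf(2) unfolding lp_def by simp
qed

lemma lp_mono: assumes "1 \<le> j" "j \<le> j'" shows "lp i j' \<le> lp i j"
  using assms(2)
proof (induction j' rule: dec_induct)
  case base then show ?case by simp
next
  case (step k)
  have "lp i (Suc k) \<le> lp i k" unfolding lp_def
    using shape_mono[OF cw_distinct[OF basic(3)]] step assms(1) by (meson le_trans)
  then show ?case using step by simp
qed

lemma lp_zero: "n < j \<Longrightarrow> lp i j = 0"
proof (rule ccontr)
  assume a: "n < j" "lp i j \<noteq> 0"
  have "1 \<le> lp i j'" if "j' \<in> {1..j}" for j' using lp_mono[of j' j i] that a by auto
  then have "(\<Sum>j'=1..j. (1::nat)) \<le> (\<Sum>j'=1..j. lp i j')" by (meson sum_mono)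
  then have "j \<le> (\<Sum>j'=1..j. lp i j')" by simp
  then show False using lp_sum_le[where i=i and t=j] a by simp
qed

lemma lp_le: "lp i j \<le> n"
proof (cases "1 \<le> j")
  case True
  have "lp i j \<le> (\<Sum>j'=1..j. lp i j')"
    by (rule member_le_sum) (use True in auto)
  then show ?thesis using lp_sum_le[where i=i and t=j] by simp
next
  case False
  then show ?thesis by (simp add: lp_def part_def)
qed

lemma cw_len: "length (color_word w c i) = card {p. p < n \<and> c!p = i}"
proof -
  have "length (color_word w c i) = length (filter (\<lambda>p. c!p = i) [0..<n])" unfolding cw_eq basic(1) by simp
  also have "\<dots> = card {p. p < n \<and> c!p = i}"
    by (subst distinct_length_filter) (auto intro: arg_cong[where f=card])
  finally show ?thesis .
qed

lemma lp_total: "(\<Sum>j=1..n. lp i j) = length (color_word w c i)"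
proof -
  have "length (color_word w c i) \<le> n" unfolding cw_len
    by (metis (no_types, lifting) card_lessThan card_mono finite_lessThan lessThan_iff mem_Collect_eq subsetI)
  then show ?thesis unfolding lp_def using shape_total[OF cw_distinct[OF basic(3)]] by blast
qed

lemma sum_cw: "(\<Sum>i<m. length (color_word w c i)) = n"
proof -
  have "(\<Sum>i<m. card {p. p < n \<and> c!p = i}) = card (\<Union>i<m. {p. p < n \<and> c!p = i})"
    by (rule card_UN_disjoint[symmetric]) auto
  also have "(\<Union>i<m. {p. p < n \<and> c!p = i}) = {..<n}" using basic(4) by auto
  finally show ?thesis unfolding cw_len by simp
qed

lemma val_dec: "1 \<le> j \<Longrightarrow> j < j' \<Longrightarrow> val (i, j') < val (i, j)"
proof -
  assume a: "1 \<le> j" "j < j'"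
  have "lp i j' \<le> lp i j" using lp_mono a by simp
  then have "int (lp i j') - int j' < int (lp i j) - int j" using a by simp
  then have "int m * (int (lp i j') - int j') < int m * (int (lp i j) - int j)"
    using m1 by (intro mult_strict_left_mono) auto
  then show ?thesis unfolding val_eq by simp
qed

lemma val_mod: "i < m \<Longrightarrow> val (i, j) mod int m = int i"
  unfolding val_eq by simp

lemma val_inj: "inj_on val II"
proof (rule inj_onI)
  fix a b assume ab: "a \<in> II" "b \<in> II" "val a = val b"
  obtain i j i' j' where ij: "a = (i, j)" "b = (i', j')" by (cases a, cases b) auto
  have ii: "i = i'" using val_mod[of i j] val_mod[of i' j'] ab ij unfolding II_def by auto
  have "j = j'"
  proof (rule ccontr)
    assume "j \<noteq> j'"
    then consider "j < j'" | "j' < j" by linarith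
    then show False using val_dec[of j j' i] val_dec[of j' j i] ab ij ii unfolding II_def by (cases; auto)
  qed
  then show "a = b" using ij ii by simp
qed

lemma val_upper: "a \<in> II \<Longrightarrow> val a < int (m * n)"
proof -
  assume "a \<in> II"
  then obtain i j where a: "a = (i, j)" "i < m" "1 \<le> j" unfolding II_def by auto
  have "int (lp i j) - int j \<le> int n - 1" using lp_le[of i j] a by simp
  then have "int m * (int (lp i j) - int j) \<le> int m * (int n - 1)" using m1 by (intro mult_left_mono) auto
  then show ?thesis unfolding a val_eq using a(2) by (simp add: algebra_simps)
qed

definition gam :: "nat \<Rightarrow> nat \<times> nat" where "gam q = (m - 1 - q mod m, q div m + 1)"

lemma gam_in: "gam q \<in> II" unfolding gam_def II_def using m1 by auto

lemma gam_beta: "int (fst (gam q)) - int m * int (snd (gam q)) = - (int q + 1)"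
proof -
  have mm: "q mod m \<le> m - 1" using m1 by (metis Suc_pred' le_simps(2) less_le_trans mod_less_divisor zero_less_one)
  have "int (m - 1 - q mod m) = int m - 1 - int (q mod m)" using mm m1 by simp
  moreover have "int q = int m * int (q div m) + int (q mod m)"
    by (metis of_nat_add of_nat_mult div_mult_mod_eq mult.commute)
  ultimately show ?thesis unfolding gam_def by (simp add: algebra_simps)
qed

lemma gam_inj: "inj gam"
proof (rule injI)
  fix q q' assume "gam q = gam q'"
  then have "- (int q + 1) = - (int q' + 1)" using gam_beta[of q] gam_beta[of q'] by metis
  then show "q = q'" by simp
qed

lemma gam_surj: "a \<in> II \<Longrightarrow> \<exists>q. a = gam q"
proof -
  assume "a \<in> II"
  then obtain i j where a: "a = (i, j)" "i < m" "1 \<le> j" unfolding II_def by auto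
  define r where "r = m - 1 - i"
  have r: "r < m" using a m1 unfolding r_def by simp
  define q where "q = r + m * (j - 1)"
  have d: "q div m = j - 1" "q mod m = r" using r unfolding q_def by auto
  have ri: "m - 1 - r = i" using a unfolding r_def by simp
  have "gam q = (i, j)" unfolding gam_def d using a ri by auto
  then show ?thesis using a by metis
qed

lemma val_ge_beta: "a \<in> II \<Longrightarrow> int (fst a) - int m * int (snd a) \<le> val a"
  by (cases a) (simp add: val_eq algebra_simps)

lemma val_le_beta: "a \<in> II \<Longrightarrow> val a \<le> int (fst a) - int m * int (snd a) + int (m * n)"
proof -
  assume "a \<in> II"
  obtain i j where a: "a = (i, j)" by (cases a)
  have "int m * int (lp i j) \<le> int m * int n" using lp_le[of i j] by (simp add: mult_left_mono)
  then show ?thesis unfolding a by (simp add: val_eq algebra_simps)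
qed

definition Vx :: "int \<Rightarrow> (nat \<times> nat) set" where "Vx x = {a \<in> II. x \<le> val a}"
definition NN :: "int \<Rightarrow> nat" where "NN x = card (Vx x)"

lemma Vx_fin: "finite (Vx x)"
proof -
  have "Vx x \<subseteq> gam ` {..<nat (int (m * n) - x)}"
  proof
    fix a assume "a \<in> Vx x"
    then have a: "a \<in> II" "x \<le> val a" unfolding Vx_def by auto
    obtain q where q: "a = gam q" using gam_surj[OF a(1)] by blast
    have "x \<le> - (int q + 1) + int (m * n)" using val_le_beta[OF a(1)] gam_beta[of q] q a(2) by simp
    then have "q < nat (int (m * n) - x)" by simp
    then show "a \<in> gam ` {..<nat (int (m * n) - x)}" using q by simp
  qed
  then show ?thesis using finite_subset by blast
qed

lemma NN_anti: "x \<le> y \<Longrightarrow> NN y \<le> NN x"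
  unfolding NN_def by (rule card_mono[OF Vx_fin]) (auto simp: Vx_def)

lemma NN_step: "NN x \<le> NN (x + 1) + 1"
proof -
  have eq: "Vx x = Vx (x + 1) \<union> {a \<in> II. val a = x}" unfolding Vx_def by auto
  have fin: "finite {a \<in> II. val a = x}" using Vx_fin[of x] unfolding Vx_def by (rule finite_subset[rotated]) auto
  have "\<forall>a\<in>{a \<in> II. val a = x}. \<forall>b\<in>{a \<in> II. val a = x}. a = b"
    using val_inj unfolding inj_on_def by auto
  then have "card {a \<in> II. val a = x} \<le> 1" using card_le_Suc0_iff_eq[OF fin] by simp
  moreover have "card (Vx x) \<le> card (Vx (x + 1)) + card {a \<in> II. val a = x}"
    unfolding eq by (rule card_Un_le)
  ultimately show ?thesis unfolding NN_def by simp
qed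

lemma NN_top: "int (m * n) \<le> x \<Longrightarrow> NN x = 0"
proof -
  assume x: "int (m * n) \<le> x"
  have "Vx x = {}" unfolding Vx_def using val_upper x by force
  then show ?thesis by (simp add: NN_def)
qed

lemma gam_set: "gam ` {..<K} = {a \<in> II. - int K \<le> int (fst a) - int m * int (snd a)}"
proof
  show "gam ` {..<K} \<subseteq> {a \<in> II. - int K \<le> int (fst a) - int m * int (snd a)}"
    using gam_in gam_beta by auto
next
  show "{a \<in> II. - int K \<le> int (fst a) - int m * int (snd a)} \<subseteq> gam ` {..<K}"
  proof
    fix a assume a: "a \<in> {a \<in> II. - int K \<le> int (fst a) - int m * int (snd a)}"
    obtain q where q: "a = gam q" using gam_surj a by blast
    then have "q < K" using a gam_beta[of q] by simp
    then show "a \<in> gam ` {..<K}" using q by simp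
  qed
qed

lemma card_gam: "card (gam ` {..<K}) = K"
  using card_image[OF inj_on_subset[OF gam_inj subset_UNIV]] by simp

lemma NN_low: "K \<le> NN (- int K)"
proof -
  have "gam ` {..<K} \<subseteq> Vx (- int K)" unfolding gam_set Vx_def using val_ge_beta by fastforce
  then show ?thesis unfolding NN_def using card_mono[OF Vx_fin] card_gam by metis
qed

lemma Vx_exact: "m * n \<le> K \<Longrightarrow> Vx (- int K) = gam ` {..<K}"
proof
  assume K: "m * n \<le> K"
  show "Vx (- int K) \<subseteq> gam ` {..<K}"
  proof
    fix a assume "a \<in> Vx (- int K)"
    then have a: "a \<in> II" "- int K \<le> val a" unfolding Vx_def by auto
    obtain i j where ij: "a = (i, j)" "i < m" "1 \<le> j" using a(1) unfolding II_def by auto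
    have "- int K \<le> int i - int m * int j"
    proof (cases "lp i j = 0")
      case True
      then show ?thesis using a(2) ij by (simp add: val_eq algebra_simps)
    next
      case False
      then have "j \<le> n" using lp_zero by (meson not_le)
      then have "int m * int j \<le> int (m * n)" by (simp add: mult_left_mono)
      then show ?thesis using K by linarith
    qed
    then show "a \<in> gam ` {..<K}" unfolding gam_set using a ij by simp
  qed
qed (auto simp: gam_set Vx_def dest: val_ge_beta)

end

context CP begin

definition sk :: "nat \<Rightarrow> int" where
  "sk k = Max {x. - int k \<le> x \<and> x \<le> int (m * n) \<and> k \<le> NN x}"

lemma sk_props: "- int k \<le> sk k \<and> NN (sk k) = k \<and> NN (sk k + 1) = k - 1"
proof -
  define X where "X = {x. - int k \<le> x \<and> x \<le> int (m * n) \<and> k \<le> NN x}"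
  have finX: "finite X" unfolding X_def by (rule finite_subset[of _ "{- int k..int (m * n)}"]) auto
  have z0: "0 \<le> int (m * n)" by (rule of_nat_0_le_iff)
  have z: "- int k \<le> int (m * n)" using z0 by linarith
  have inX: "- int k \<in> X" unfolding X_def using NN_low[of k] z by simp
  have skX: "sk k \<in> X" unfolding sk_def X_def[symmetric] using finX inX Max_in by blast
  have skmax: "y \<le> sk k" if "y \<in> X" for y unfolding sk_def X_def[symmetric] using finX that by simp
  have a1: "- int k \<le> sk k" "k \<le> NN (sk k)" "sk k \<le> int (m * n)" using skX unfolding X_def by auto
  show ?thesis
  proof (cases "k = 0")
    case True
    have "int (m * n) \<in> X" unfolding X_def using True by simp
    then have "int (m * n) \<le> sk k" using skmax by blast
    then show ?thesis using NN_top[of "sk k"] NN_top[of "sk k + 1"] a1 True by simp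
  next
    case False
    have lt: "NN (sk k + 1) < k"
    proof (cases "sk k + 1 \<le> int (m * n)")
      case True
      have "sk k + 1 \<notin> X" using skmax by fastforce
      then show ?thesis using True a1 unfolding X_def by auto
    next
      case False
      then show ?thesis using NN_top[of "sk k + 1"] \<open>k \<noteq> 0\<close> by simp
    qed
    have "NN (sk k) \<le> NN (sk k + 1) + 1" by (rule NN_step)
    then show ?thesis using lt a1 by simp
  qed
qed

definition Top :: "nat \<Rightarrow> (nat \<times> nat) set" where "Top k = Vx (sk k)"

lemma Top_card: "card (Top k) = k" using sk_props unfolding Top_def NN_def by blast
lemma Top_fin: "finite (Top k)" unfolding Top_def by (rule Vx_fin)
lemma Top_II: "Top k \<subseteq> II" unfolding Top_def Vx_def by auto

lemma Vx_eq: "NN x = NN y \<Longrightarrow> Vx x = Vx y"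
proof -
  assume e: "NN x = NN y"
  have "Vx y \<subseteq> Vx x \<or> Vx x \<subseteq> Vx y" unfolding Vx_def by (cases "x \<le> y") auto
  then show ?thesis using e unfolding NN_def by (metis Vx_fin card_subset_eq)
qed

lemma Top_max:
  assumes D: "D \<subseteq> II" "finite D" "card D = k"
  shows "sum val D \<le> sum val (Top k)"
proof -
  let ?T = "Top k"
  have inT: "sk k \<le> val a" if "a \<in> ?T" for a using that unfolding Top_def Vx_def by auto
  have outT: "val b < sk k" if "b \<in> II" "b \<notin> ?T" for b using that unfolding Top_def Vx_def by auto
  have cd: "card (D - ?T) = card (?T - D)"
  proof -
    have "card (D - ?T) = card D - card (D \<inter> ?T)" using D(2) by (metis card_Diff_subset_Int finite_Int)
    moreover have "card (?T - D) = card ?T - card (?T \<inter> D)" using Top_fin by (metis card_Diff_subset_Int finite_Int)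
    ultimately show ?thesis using D(3) Top_card by (simp add: Int_commute)
  qed
  have s1: "sum val (D - ?T) \<le> of_nat (card (D - ?T)) * sk k"
    by (rule sum_bounded_above) (use outT D(1) in fastforce)
  have s2: "of_nat (card (?T - D)) * sk k \<le> sum val (?T - D)"
    by (rule sum_bounded_below) (use inT in blast)
  have "sum val D = sum val (D - ?T) + sum val (D \<inter> ?T)" using D(2) by (metis Diff_Int2 Int_commute inf.idem sum.Int_Diff add.commute)
  moreover have "sum val ?T = sum val (?T - D) + sum val (D \<inter> ?T)" using Top_fin by (metis Int_commute add.commute sum.Int_Diff)
  moreover have s2': "of_nat (card (D - ?T)) * sk k \<le> sum val (?T - D)" using s2 cd by simp
  ultimately show ?thesis using s1 by linarith
qed

lemma Top_step:
  assumes k: "1 \<le> k"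
  shows "sum val (Top k) = sum val (Top (k - 1)) + sk k"
proof -
  have e1: "Vx (sk k + 1) = Top (k - 1)" unfolding Top_def
    by (rule Vx_eq) (use sk_props[of k] sk_props[of "k - 1"] in simp)
  define E where "E = {a \<in> II. val a = sk k}"
  have split: "Top k = Vx (sk k + 1) \<union> E" "Vx (sk k + 1) \<inter> E = {}" unfolding Top_def Vx_def E_def by auto
  have finE: "finite E" using Top_fin split(1) by (metis finite_Un)
  have "card (Top k) = card (Vx (sk k + 1)) + card E" using split Vx_fin finE by (simp add: card_Un_disjoint)
  then have "card E = 1" using Top_card[of k] Top_card[of "k - 1"] e1 k by simp
  then obtain a0 where a0: "E = {a0}" using card_1_singletonE by blast
  have va: "val a0 = sk k" using a0 unfolding E_def by auto
  have "sum val (Top k) = sum val (Vx (sk k + 1)) + sum val E"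
    using split Vx_fin finE by (simp add: sum.union_disjoint)
  then show ?thesis using e1 a0 va by simp
qed

lemma Top0: "Top 0 = {}" using Top_card[of 0] Top_fin by simp

end

lemma tri: "int ((t + 1) choose 2) = (\<Sum>j=1..t. int j)"
proof (induction t)
  case 0 then show ?case by simp
next
  case (Suc t)
  have "(Suc t + 1) choose 2 = (t + 1 choose 2) + (t + 1)"
    by (simp add: numeral_2_eq_2)
  then show ?case using Suc by simp
qed

lemma sum_num_color: "(\<forall>x\<in>set L. fst x < m) \<Longrightarrow> (\<Sum>i<m. num_color L i) = length L"
proof (induction L)
  case Nil then show ?case by (simp add: num_color_def)
next
  case (Cons x L)
  have "(\<Sum>i<m. num_color (x # L) i) = (\<Sum>i<m. (if fst x = i then 1 else 0) + num_color L i)"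
    by (rule sum.cong) (auto simp: num_color_def)
  also have "\<dots> = (\<Sum>i<m. (if fst x = i then 1 else 0)) + (\<Sum>i<m. num_color L i)" by (simp add: sum.distrib)
  also have "(\<Sum>i<m. (if fst x = i then 1 else 0)) = (1::nat)" using Cons.prems by (simp add: sum.delta)
  finally show ?case using Cons by simp
qed

context CP begin

lemma Gsum: "(\<Sum>j=1..t. val (i, j)) = int m * int (\<Sum>j=1..t. lp i j) + int i * int t - int m * int ((t + 1) choose 2)"
proof -
  have "(\<Sum>j=1..t. val (i, j)) = (\<Sum>j=1..t. int m * int (lp i j) - int m * int j + int i)"
    by (simp add: val_eq algebra_simps)
  also have "\<dots> = int m * (\<Sum>j=1..t. int (lp i j)) - int m * (\<Sum>j=1..t. int j) + int i * int t"
    by (simp add: sum.distrib sum_subtractf sum_distrib_left)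
  finally show ?thesis using tri[of t] by simp
qed

lemma score_eq:
  assumes "length L = k" "\<forall>x\<in>set L. fst x < m"
  shows "score m L = int m * int (card (\<Union> (snd ` set L))) + int ((k + 1) choose 2)
     + (\<Sum>i<m. int i * int (num_color L i) - int m * int ((num_color L i + 1) choose 2))"
  using assms unfolding score_def by simp

lemma score_bound:
  assumes "length L = k" "\<forall>x\<in>set L. fst x < m" "card (\<Union> (snd ` set L)) = (\<Sum>i<m. cU i)"
    "\<And>i. i < m \<Longrightarrow> cU i \<le> (\<Sum>j=1..num_color L i. lp i j)"
  shows "score m L \<le> int ((k + 1) choose 2) + (\<Sum>i<m. \<Sum>j=1..num_color L i. val (i, j))"
proof -
  have "int m * int (card (\<Union> (snd ` set L))) = (\<Sum>i<m. int m * int (cU i))"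
    using assms(3) by (simp add: sum_distrib_left)
  also have "\<dots> \<le> (\<Sum>i<m. int m * int (\<Sum>j=1..num_color L i. lp i j))"
  proof (rule sum_mono)
    fix i assume "i \<in> {..<m}"
    then have "cU i \<le> (\<Sum>j=1..num_color L i. lp i j)" using assms(4) by simp
    then show "int m * int (cU i) \<le> int m * int (\<Sum>j=1..num_color L i. lp i j)"
      by (metis of_nat_le_iff mult_left_mono of_nat_0_le_iff)
  qed
  finally have "score m L \<le> (\<Sum>i<m. int m * int (\<Sum>j=1..num_color L i. lp i j)) + int ((k + 1) choose 2)
     + (\<Sum>i<m. int i * int (num_color L i) - int m * int ((num_color L i + 1) choose 2))"
    using score_eq[OF assms(1,2)] by linarith
  also have "\<dots> = int ((k + 1) choose 2) + (\<Sum>i<m. \<Sum>j=1..num_color L i. val (i, j))"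
  proof -
    have e: "(\<Sum>i<m. \<Sum>j=1..num_color L i. val (i, j)) = (\<Sum>i<m. int m * int (\<Sum>j=1..num_color L i. lp i j) + (int i * int (num_color L i) - int m * int ((num_color L i + 1) choose 2)))"
    proof (rule sum.cong)
      fix x show "(\<Sum>j=1..num_color L x. val (x, j)) = int m * int (\<Sum>j=1..num_color L x. lp x j) + (int x * int (num_color L x) - int m * int ((num_color L x + 1) choose 2))"
        using Gsum[where t="num_color L x" and i=x] by linarith
    qed simp
    show ?thesis unfolding e sum.distrib by linarith
  qed
  finally show ?thesis .
qed

lemma sum_Sigma_val: "(\<Sum>i<m. \<Sum>j=1..kk i. val (i, j)) = sum val (Sigma {..<m} (\<lambda>i. {1..kk i}))"
  by (simp add: sum.Sigma)

lemma Sigma_card: "card (Sigma {..<m} (\<lambda>i. {1..kk i})) = (\<Sum>i<m. kk i)"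
  by (simp add: card_SigmaI)

lemma Sigma_II: "Sigma {..<m} (\<lambda>i. {1..kk i}) \<subseteq> II" unfolding II_def by auto

lemma choices_upper:
  assumes L: "L \<in> choices m w c k"
  shows "score m L \<le> int ((k + 1) choose 2) + sum val (Top k)"
proof -
  have len: "length L = k" and el: "\<And>a. a < k \<Longrightarrow> fst (L!a) < m \<and> mono_incr w c (fst (L!a)) (snd (L!a))"
    and dj: "\<And>a b. a < k \<Longrightarrow> b < k \<Longrightarrow> a \<noteq> b \<Longrightarrow> snd (L!a) \<inter> snd (L!b) = {}"
    using L unfolding choices_def by auto
  have fstm: "\<forall>x\<in>set L. fst x < m"
  proof
    fix x assume "x \<in> set L"
    then obtain a where "a < length L" "L!a = x" by (auto simp: in_set_conv_nth)
    then show "fst x < m" using el len by auto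
  qed
  define U where "U i = \<Union> ((\<lambda>a. snd (L!a)) ` {a. a < k \<and> fst (L!a) = i})" for i
  have Ucol: "U i \<subseteq> {p. p < n \<and> c!p = i}" for i
    using el basic(1) unfolding U_def mono_incr_def by fastforce
  have Ufin: "finite (U i)" for i by (rule finite_subset[of _ "{..<n}"]) (use Ucol[of i] in auto)
  have uni: "\<Union> (snd ` set L) = (\<Union>i<m. U i)"
  proof
    show "\<Union> (snd ` set L) \<subseteq> (\<Union>i<m. U i)"
    proof
      fix x assume "x \<in> \<Union> (snd ` set L)"
      then obtain y where y: "y \<in> set L" "x \<in> snd y" by auto
      then obtain a where a: "a < k" "L!a = y" using len by (auto simp: in_set_conv_nth)
      have "x \<in> U (fst (L!a))" unfolding U_def using a y by auto
      moreover have "fst (L!a) < m" using el a by auto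
      ultimately show "x \<in> (\<Union>i<m. U i)" by auto
    qed
  next
    show "(\<Union>i<m. U i) \<subseteq> \<Union> (snd ` set L)"
    proof
      fix x assume "x \<in> (\<Union>i<m. U i)"
      then obtain a where a: "a < k" "x \<in> snd (L!a)" unfolding U_def by auto
      then have "L!a \<in> set L" using len by simp
      then show "x \<in> \<Union> (snd ` set L)" using a by blast
    qed
  qed
  have cardU: "card (\<Union> (snd ` set L)) = (\<Sum>i<m. card (U i))"
    unfolding uni
  proof (rule card_UN_disjoint)
    show "\<forall>i\<in>{..<m}. finite (U i)" using Ufin by simp
    show "\<forall>i\<in>{..<m}. \<forall>j\<in>{..<m}. i \<noteq> j \<longrightarrow> U i \<inter> U j = {}"
    proof (intro ballI impI)
      fix i j :: nat assume "i \<in> {..<m}" "j \<in> {..<m}" "i \<noteq> j"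
      then show "U i \<inter> U j = {}" using Ucol[of i] Ucol[of j] by blast
    qed
  qed simp
  have bnd: "card (U i) \<le> (\<Sum>j=1..num_color L i. lp i j)" if "i < m" for i
  proof -
    define A where "A = {a. a < k \<and> fst (L!a) = i}"
    have cA: "card A = num_color L i" unfolding A_def num_color_def length_filter_conv_card len by simp
    define f where "f p = (SOME a. a < k \<and> p \<in> snd (L!a))" for p
    have fp: "f p = a" if "a < k" "p \<in> snd (L!a)" for p a
    proof -
      have "f p < k \<and> p \<in> snd (L!(f p))" unfolding f_def by (rule someI[of _ a]) (use that in simp)
      then show ?thesis using dj that by blast
    qed
    have "vw w c i A (U i) f"
      unfolding vw_def
    proof (intro conjI ballI impI)
      show "U i \<subseteq> {p. p < length w \<and> c!p = i}" using Ucol basic(1) by simp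
      show "f ` U i \<subseteq> A" unfolding U_def A_def using fp by auto
    next
      fix p q assume pq: "p \<in> U i" "q \<in> U i" "p < q \<and> f p = f q"
      then obtain a b where ab: "a < k" "p \<in> snd (L!a)" "b < k" "q \<in> snd (L!b)" unfolding U_def by auto
      have "a = b" using fp[OF ab(1,2)] fp[OF ab(3,4)] pq by simp
      then show "w!p < w!q" using el[OF ab(1)] ab pq unfolding mono_incr_def by blast
    qed
    moreover have "finite A" unfolding A_def by simp
    ultimately have "card (U i) \<le> (\<Sum>j=1..card A. part (rs_shape (color_word w c i)) j)"
      using gw_upper[OF basic(3)] by blast
    then show ?thesis unfolding cA lp_def .
  qed
  have "score m L \<le> int ((k + 1) choose 2) + (\<Sum>i<m. \<Sum>j=1..num_color L i. val (i, j))"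
    by (rule score_bound[OF len fstm cardU bnd])
  also have "(\<Sum>i<m. \<Sum>j=1..num_color L i. val (i, j)) \<le> sum val (Top k)"
  proof -
    let ?D = "Sigma {..<m} (\<lambda>i. {1..num_color L i})"
    have "card ?D = k" unfolding Sigma_card using sum_num_color[OF fstm] len by simp
    then have "sum val ?D \<le> sum val (Top k)" using Top_max Sigma_II by (simp add: finite_SigmaI)
    then show ?thesis using sum_Sigma_val by simp
  qed
  finally show ?thesis by simp
qed

end

lemma col_disj: "A \<subseteq> {p. P p \<and> c!p = i} \<Longrightarrow> B \<subseteq> {p. P p \<and> c!p = j} \<Longrightarrow> i \<noteq> j \<Longrightarrow> A \<inter> B = {}"
  by auto

context CP begin

lemma Top_row:
  assumes "i < m"
  shows "{j. (i, j) \<in> Top k} = {1..card {j. (i, j) \<in> Top k}}"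
proof -
  define X where "X = {j. (i, j) \<in> Top k}"
  have X0: "0 \<notin> X" using Top_II unfolding X_def II_def by auto
  have finX: "finite X"
  proof -
    have "X \<subseteq> snd ` Top k" unfolding X_def by force
    then show ?thesis using Top_fin finite_subset by blast
  qed
  have down: "j' \<in> X" if "j \<in> X" "1 \<le> j'" "j' \<le> j" for j j'
  proof (cases "j' = j")
    case False
    then have lt: "j' < j" using that by simp
    have "val (i, j) < val (i, j')" by (rule val_dec[OF that(2) lt])
    moreover have "sk k \<le> val (i, j)" using that(1) unfolding X_def Top_def Vx_def by auto
    moreover have "(i, j') \<in> II" using assms that unfolding II_def by auto
    ultimately show ?thesis unfolding X_def Top_def Vx_def by auto
  qed (use that in simp)
  define Y where "Y = {j. Suc j \<in> X}"
  have XY: "X = Suc ` Y"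
  proof
    show "X \<subseteq> Suc ` Y"
    proof
      fix j assume j: "j \<in> X"
      then obtain j0 where "j = Suc j0" using X0 by (cases j) auto
      then show "j \<in> Suc ` Y" using j unfolding Y_def by auto
    qed
  qed (auto simp: Y_def)
  have finY: "finite Y" using finX XY by (metis finite_imageD inj_Suc inj_on_subset subset_UNIV)
  have Yd: "Y = {..<card Y}"
  proof (rule down_closed[OF finY])
    fix a b assume "b \<in> Y" "a \<le> b"
    then show "a \<in> Y" using down[of "Suc b" "Suc a"] unfolding Y_def by auto
  qed
  have "card X = card Y" unfolding XY by (simp add: card_image)
  then have "X = {1..card X}" using XY Yd by (metis image_Suc_lessThan)
  then show ?thesis unfolding X_def .
qed

definition kk :: "nat \<Rightarrow> nat \<Rightarrow> nat" where "kk k i = card {j. (i, j) \<in> Top k}"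

lemma Top_Sigma: "Top k = Sigma {..<m} (\<lambda>i. {1..kk k i})"
proof
  show "Top k \<subseteq> Sigma {..<m} (\<lambda>i. {1..kk k i})"
  proof
    fix x assume x: "x \<in> Top k"
    obtain i j where ij: "x = (i, j)" by (cases x)
    have i: "i < m" using Top_II x ij unfolding II_def by auto
    have "j \<in> {j. (i, j) \<in> Top k}" using x ij by simp
    then have "j \<in> {1..kk k i}" using Top_row[OF i, of k] unfolding kk_def by simp
    then show "x \<in> Sigma {..<m} (\<lambda>i. {1..kk k i})" using i ij by simp
  qed
  show "Sigma {..<m} (\<lambda>i. {1..kk k i}) \<subseteq> Top k"
  proof
    fix x assume x: "x \<in> Sigma {..<m} (\<lambda>i. {1..kk k i})"
    obtain i j where ij: "x = (i, j)" by (cases x)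
    have i: "i < m" "j \<in> {1..kk k i}" using x ij by auto
    have e: "{j. (i, j) \<in> Top k} = {1..kk k i}" using Top_row[OF i(1), of k] unfolding kk_def .
    have "j \<in> {j. (i, j) \<in> Top k}" unfolding e using i(2) .
    then show "x \<in> Top k" using ij by simp
  qed
qed

lemma kk_sum: "(\<Sum>i<m. kk k i) = k"
  using Top_card[of k] unfolding Top_Sigma by (simp add: card_SigmaI)

lemma score_exact:
  assumes "length L = k" "\<forall>x\<in>set L. fst x < m" "card (\<Union> (snd ` set L)) = (\<Sum>i<m. cU i)"
    "\<And>i. i < m \<Longrightarrow> cU i = (\<Sum>j=1..num_color L i. lp i j)"
  shows "score m L = int ((k + 1) choose 2) + (\<Sum>i<m. \<Sum>j=1..num_color L i. val (i, j))"
proof -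
  have "int m * int (card (\<Union> (snd ` set L))) = (\<Sum>i<m. int m * int (cU i))"
    using assms(3) by (simp add: sum_distrib_left)
  also have "\<dots> = (\<Sum>i<m. int m * int (\<Sum>j=1..num_color L i. lp i j))"
    using assms(4) by (intro sum.cong) simp_all
  finally have "score m L = (\<Sum>i<m. int m * int (\<Sum>j=1..num_color L i. lp i j)) + int ((k + 1) choose 2)
     + (\<Sum>i<m. int i * int (num_color L i) - int m * int ((num_color L i + 1) choose 2))"
    using score_eq[OF assms(1,2)] by linarith
  also have "\<dots> = int ((k + 1) choose 2) + (\<Sum>i<m. \<Sum>j=1..num_color L i. val (i, j))"
  proof -
    have e: "(\<Sum>i<m. \<Sum>j=1..num_color L i. val (i, j)) = (\<Sum>i<m. int m * int (\<Sum>j=1..num_color L i. lp i j) + (int i * int (num_color L i) - int m * int ((num_color L i + 1) choose 2)))"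
    proof (rule sum.cong)
      fix x show "(\<Sum>j=1..num_color L x. val (x, j)) = int m * int (\<Sum>j=1..num_color L x. lp x j) + (int x * int (num_color L x) - int m * int ((num_color L x + 1) choose 2))"
        using Gsum[where t="num_color L x" and i=x] by linarith
    qed simp
    show ?thesis unfolding e sum.distrib by linarith
  qed
  finally show ?thesis .
qed

lemma choices_lower:
  "\<exists>L\<in>choices m w c k. score m L = int ((k + 1) choose 2) + sum val (Top k)"
proof -
  let ?kk = "kk k"
  have ex: "\<exists>S f. vw w c i {..<?kk i} S f \<and> card S = (\<Sum>j=1..?kk i. lp i j)" for i
    using gw_lower[OF basic(3)] unfolding lp_def by blast
  define SS where "SS i = (SOME S. \<exists>f. vw w c i {..<?kk i} S f \<and> card S = (\<Sum>j=1..?kk i. lp i j))" for i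
  define FF where "FF i = (SOME f. vw w c i {..<?kk i} (SS i) f \<and> card (SS i) = (\<Sum>j=1..?kk i. lp i j))" for i
  have SF: "vw w c i {..<?kk i} (SS i) (FF i) \<and> card (SS i) = (\<Sum>j=1..?kk i. lp i j)" for i
  proof -
    have "\<exists>f. vw w c i {..<?kk i} (SS i) f \<and> card (SS i) = (\<Sum>j=1..?kk i. lp i j)"
      unfolding SS_def by (rule someI_ex) (rule ex)
    then show ?thesis unfolding FF_def by (rule someI_ex)
  qed
  have SScol: "SS i \<subseteq> {p. p < n \<and> c!p = i}" for i using SF[of i] basic(1) unfolding vw_def by auto
  have FFl: "p \<in> SS i \<Longrightarrow> FF i p < ?kk i" for i p using SF[of i] unfolding vw_def by auto
  have FFinc: "p \<in> SS i \<Longrightarrow> q \<in> SS i \<Longrightarrow> p < q \<Longrightarrow> FF i p = FF i q \<Longrightarrow> w!p < w!q" for i p q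
    using SF[of i] unfolding vw_def by auto
  define Q where "Q = concat (map (\<lambda>i. map (Pair i) [0..<?kk i]) [0..<m])"
  have setQ: "set Q = Sigma {..<m} (\<lambda>i. {..<?kk i})" unfolding Q_def by auto
  have lenQ: "length Q = k"
  proof -
    have "length Q = sum_list (map ?kk [0..<m])" unfolding Q_def by (simp add: length_concat comp_def)
    also have "\<dots> = (\<Sum>i<m. ?kk i)" by (simp add: sum_list_sum_nth atLeast0LessThan)
    finally show ?thesis using kk_sum by simp
  qed
  have distQ: "distinct Q"
  proof (rule card_distinct)
    show "card (set Q) = length Q" unfolding setQ lenQ using kk_sum by (simp add: card_SigmaI)
  qed
  define g where "g = (\<lambda>(i, l). (i, {p \<in> SS i. FF i p = l}))"
  have gfst: "fst (g q) = fst q" for q unfolding g_def by (cases q) auto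
  define L where "L = map g Q"
  have lenL: "length L = k" unfolding L_def using lenQ by simp
  have gq: "g q = (fst q, {p \<in> SS (fst q). FF (fst q) p = snd q})" for q
    by (cases q) (simp add: g_def)
  have Lnth: "L!a = (fst (Q!a), {p \<in> SS (fst (Q!a)). FF (fst (Q!a)) p = snd (Q!a)})" if "a < k" for a
  proof -
    have "L!a = g (Q!a)" unfolding L_def using that lenQ by simp
    then show ?thesis using gq by simp
  qed
  have Qin: "fst (Q!a) < m \<and> snd (Q!a) < ?kk (fst (Q!a))" if "a < k" for a
  proof -
    have "Q!a \<in> set Q" using that lenQ by simp
    moreover obtain i l where "Q!a = (i, l)" by (cases "Q!a")
    ultimately show ?thesis unfolding setQ by simp
  qed
  have Lch: "L \<in> choices m w c k"
    unfolding choices_def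
  proof (intro CollectI conjI allI impI)
    show "length L = k" by (rule lenL)
  next
    fix a assume a: "a < k"
    show "fst (L!a) < m" using Lnth[OF a] Qin[OF a] by simp
    show "mono_incr w c (fst (L!a)) (snd (L!a))"
      unfolding Lnth[OF a] mono_incr_def using SScol[of "fst (Q!a)"] basic(1) FFinc[of _ "fst (Q!a)"] by auto
  next
    fix a b assume ab: "a < k" "b < k" "a \<noteq> b"
    have "Q!a \<noteq> Q!b" using nth_eq_iff_index_eq[OF distQ] ab lenQ by simp
    then consider "fst (Q!a) \<noteq> fst (Q!b)" | "fst (Q!a) = fst (Q!b)" "snd (Q!a) \<noteq> snd (Q!b)"
      using prod_eq_iff by blast
    then show "snd (L!a) \<inter> snd (L!b) = {}"
    proof cases
      case 1
      have "SS (fst (Q!a)) \<inter> SS (fst (Q!b)) = {}"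
        by (rule col_disj[OF SScol SScol 1])
      then show ?thesis unfolding Lnth[OF ab(1)] Lnth[OF ab(2)] by auto
    next
      case 2
      then show ?thesis unfolding Lnth[OF ab(1)] Lnth[OF ab(2)] by auto
    qed
  qed
  have fstm: "\<forall>x\<in>set L. fst x < m" unfolding L_def using setQ gfst by auto
  have nc: "num_color L i = ?kk i" if "i < m" for i
  proof -
    have "num_color L i = length (filter (\<lambda>q. fst q = i) Q)"
      unfolding num_color_def L_def filter_map length_map comp_def gfst ..
    also have "\<dots> = card ({q. fst q = i} \<inter> set Q)" using distinct_length_filter[OF distQ] by simp
    also have "{q. fst q = i} \<inter> set Q = {i} \<times> {..<?kk i}" unfolding setQ using that by auto
    finally show ?thesis by simp
  qed
  have uni: "\<Union> (snd ` set L) = (\<Union>i<m. SS i)"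
  proof
    show "\<Union> (snd ` set L) \<subseteq> (\<Union>i<m. SS i)" unfolding L_def g_def using setQ by auto
  next
    show "(\<Union>i<m. SS i) \<subseteq> \<Union> (snd ` set L)"
    proof
      fix p assume "p \<in> (\<Union>i<m. SS i)"
      then obtain i where i: "i < m" "p \<in> SS i" by auto
      then have "(i, FF i p) \<in> set Q" using setQ FFl by auto
      then have "g (i, FF i p) \<in> set L" unfolding L_def by simp
      moreover have "p \<in> snd (g (i, FF i p))" unfolding g_def using i by simp
      ultimately show "p \<in> \<Union> (snd ` set L)" by blast
    qed
  qed
  have cardU: "card (\<Union> (snd ` set L)) = (\<Sum>i<m. card (SS i))"
    unfolding uni
  proof (rule card_UN_disjoint)
    show "\<forall>i\<in>{..<m}. finite (SS i)"
    proof
      fix i assume "i \<in> {..<m}"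
      show "finite (SS i)" by (rule finite_subset[of _ "{..<n}"]) (use SScol[of i] in auto)
    qed
    show "\<forall>i\<in>{..<m}. \<forall>j\<in>{..<m}. i \<noteq> j \<longrightarrow> SS i \<inter> SS j = {}"
    proof (intro ballI impI)
      fix i j :: nat assume "i \<in> {..<m}" "j \<in> {..<m}" "i \<noteq> j"
      then show "SS i \<inter> SS j = {}" using SScol[of i] SScol[of j] by blast
    qed
  qed simp
  have "score m L = int ((k + 1) choose 2) + (\<Sum>i<m. \<Sum>j=1..num_color L i. val (i, j))"
    by (rule score_exact[OF lenL fstm cardU]) (use SF nc in simp)
  also have "(\<Sum>i<m. \<Sum>j=1..num_color L i. val (i, j)) = (\<Sum>i<m. \<Sum>j=1..?kk i. val (i, j))"
    using nc by (intro sum.cong) simp_all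
  also have "\<dots> = sum val (Top k)" unfolding Top_Sigma sum_Sigma_val ..
  finally show ?thesis using Lch by blast
qed

lemma choices_fin: "finite (choices m w c k)"
proof (rule finite_subset)
  show "choices m w c k \<subseteq> {L. set L \<subseteq> {..<m} \<times> Pow {..<length w} \<and> length L = k}"
  proof clarify
    fix L assume L: "L \<in> choices m w c k"
    have "set L \<subseteq> {..<m} \<times> Pow {..<length w}"
    proof
      fix x assume "x \<in> set L"
      then obtain a where a: "a < length L" "L!a = x" by (auto simp: in_set_conv_nth)
      then show "x \<in> {..<m} \<times> Pow {..<length w}" using L unfolding choices_def mono_incr_def
        by (cases x) force
    qed
    then show "set L \<subseteq> {..<m} \<times> Pow {..<length w} \<and> length L = k" using L unfolding choices_def by simp
  qed
  show "finite {L. set L \<subseteq> {..<m} \<times> Pow {..<length w} \<and> length L = k}"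
    by (rule finite_lists_length_eq) simp
qed

lemma l_val_eq: "l_val m w c k = int ((k + 1) choose 2) + sum val (Top k)"
  unfolding l_val_def
proof (rule Max_eqI)
  show "finite (score m ` choices m w c k)" using choices_fin by simp
  show "\<And>y. y \<in> score m ` choices m w c k \<Longrightarrow> y \<le> int ((k + 1) choose 2) + sum val (Top k)"
    using choices_upper by auto
  show "int ((k + 1) choose 2) + sum val (Top k) \<in> score m ` choices m w c k"
    using choices_lower by (metis image_eqI)
qed

end

lemma tri2: "(\<Sum>q<K. int q + 1) = int ((K + 1) choose 2)"
proof (induction K)
  case 0 then show ?case by simp
next
  case (Suc K)
  have "(Suc K + 1) choose 2 = (K + 1 choose 2) + (K + 1)" by (simp add: numeral_2_eq_2)
  then show ?case using Suc by simp
qed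

lemma telescope:
  fixes f :: "nat \<Rightarrow> int" and K :: nat
  shows "(\<Sum>k=1..K. f k - f (k - 1)) = f K - f 0"
proof (induction K)
  case 0 then show ?case by simp
next
  case (Suc K) then show ?case by simp
qed

context CP begin

lemma lam_eq: "1 \<le> k \<Longrightarrow> lam m w c k = int k + sk k"
proof -
  assume k: "1 \<le> k"
  then obtain k' where k': "k = Suc k'" by (cases k) auto
  have "int ((k + 1) choose 2) = int ((k' + 1) choose 2) + int k"
    using k' by (simp add: numeral_2_eq_2)
  then show ?thesis unfolding lam_def l_val_eq using Top_step[OF k] k' by simp
qed

lemma kth: "1 \<le> k \<Longrightarrow> kth_largest II val k (lam m w c k - int k)"
proof -
  assume k: "1 \<le> k"
  have e: "lam m w c k - int k = sk k" using lam_eq[OF k] by simp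
  have e1: "{a \<in> II. sk k \<le> val a} = Vx (sk k)" unfolding Vx_def by simp
  have e2: "{a \<in> II. sk k < val a} = Vx (sk k + 1)" unfolding Vx_def by auto
  show ?thesis unfolding kth_largest_def e e1 e2
    using Vx_fin sk_props[of k] k unfolding NN_def by simp
qed

lemma NN_exact: "m * n \<le> K \<Longrightarrow> NN (- int K) = K"
  unfolding NN_def using Vx_exact card_gam by simp

lemma sk_big: "m * n + 1 \<le> k \<Longrightarrow> sk k = - int k"
proof -
  assume k: "m * n + 1 \<le> k"
  have n1: "NN (- int k + 1) = k - 1"
  proof -
    have "- int k + 1 = - int (k - 1)" using k by simp
    then show ?thesis using NN_exact[of "k - 1"] k by simp
  qed
  have s: "- int k \<le> sk k" "NN (sk k) = k" using sk_props[of k] by auto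
  show ?thesis
  proof (rule ccontr)
    assume "sk k \<noteq> - int k"
    then have "- int k + 1 \<le> sk k" using s by simp
    then have "NN (sk k) \<le> NN (- int k + 1)" by (rule NN_anti)
    then show False using s n1 k by simp
  qed
qed

lemma l0: "l_val m w c 0 = 0" unfolding l_val_eq Top0 by simp

lemma lK: "m * n + 1 \<le> K \<Longrightarrow> l_val m w c K = int (m * n)"
proof -
  assume K: "m * n + 1 \<le> K"
  have TK: "Top K = gam ` {..<K}" unfolding Top_def sk_big[OF K] using Vx_exact K by simp
  have inj: "inj_on gam {..<K}" using gam_inj inj_on_subset subset_UNIV by blast
  have vg: "val (gam q) = - (int q + 1) + int m * int (lp (fst (gam q)) (snd (gam q)))" for q
  proof -
    obtain i j where ij: "gam q = (i, j)" by (cases "gam q")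
    have "int i - int m * int j = - (int q + 1)" using gam_beta[of q] ij by simp
    then show ?thesis unfolding ij by (simp add: val_eq algebra_simps)
  qed
  define lp' where "lp' a = lp (fst a) (snd a)" for a
  have "sum val (Top K) = (\<Sum>q<K. val (gam q))" unfolding TK using sum.reindex[OF inj] by simp
  also have "\<dots> = (\<Sum>q<K. - (int q + 1)) + (\<Sum>q<K. int m * int (lp' (gam q)))"
    unfolding vg lp'_def by (rule sum.distrib)
  also have "(\<Sum>q<K. - (int q + 1)) = - (\<Sum>q<K. int q + 1)" by (rule sum_negf)
  also have "(\<Sum>q<K. int m * int (lp' (gam q))) = int m * (\<Sum>q<K. int (lp' (gam q)))"
    by (rule sum_distrib_left[symmetric])
  also have "(\<Sum>q<K. int (lp' (gam q))) = (\<Sum>a\<in>gam ` {..<K}. int (lp' a))"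
    using sum.reindex[OF inj, of "\<lambda>a. int (lp' a)"] by (simp add: comp_def)
  also have "\<dots> = (\<Sum>a\<in>Sigma {..<m} (\<lambda>_. {1..n}). int (lp' a))"
  proof (rule sum.mono_neutral_right)
    show "finite (gam ` {..<K})" by simp
    show "Sigma {..<m} (\<lambda>_. {1..n}) \<subseteq> gam ` {..<K}"
    proof
      fix a assume a: "a \<in> Sigma {..<m} (\<lambda>_. {1..n})"
      obtain i j where ij: "a = (i, j)" by (cases a)
      have j: "i < m" "1 \<le> j" "j \<le> n" using a ij by auto
      have "int m * int j \<le> int (m * n)" using j by (simp add: mult_left_mono)
      then have "- int K \<le> int i - int m * int j" using K by linarith
      then show "a \<in> gam ` {..<K}" unfolding gam_set II_def using ij j by simp
    qed
    show "\<forall>a\<in>gam ` {..<K} - Sigma {..<m} (\<lambda>_. {1..n}). int (lp' a) = 0"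
    proof
      fix a assume a: "a \<in> gam ` {..<K} - Sigma {..<m} (\<lambda>_. {1..n})"
      obtain i j where ij: "a = (i, j)" by (cases a)
      have "a \<in> II" using a gam_in by auto
      then have "i < m" "1 \<le> j" using ij unfolding II_def by auto
      then have "n < j" using a ij by auto
      then show "int (lp' a) = 0" unfolding lp'_def ij using lp_zero by simp
    qed
  qed
  also have "\<dots> = (\<Sum>i<m. \<Sum>j=1..n. int (lp i j))" unfolding lp'_def by (simp add: sum.Sigma case_prod_beta)
  also have "\<dots> = (\<Sum>i<m. int (length (color_word w c i)))"
    using lp_total by (intro sum.cong) (simp_all flip: of_nat_sum)
  also have "\<dots> = int n" using sum_cw by (simp flip: of_nat_sum)
  finally have "sum val (Top K) = - int ((K + 1) choose 2) + int m * int n" using tri2[of K] by simp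
  then show ?thesis unfolding l_val_eq by simp
qed

lemma partition: "is_partition_of (lam m w c) (m * n)"
  unfolding is_partition_of_def
proof (intro conjI allI impI)
  fix k :: nat assume k: "1 \<le> k"
  show "0 \<le> lam m w c k" using lam_eq[OF k] sk_props[of k] by simp
  have "sk (Suc k) < sk k"
  proof (rule ccontr)
    assume "\<not> sk (Suc k) < sk k"
    then have "NN (sk (Suc k)) \<le> NN (sk k)" by (intro NN_anti) simp
    then show False using sk_props[of k] sk_props[of "Suc k"] by simp
  qed
  then show "lam m w c (Suc k) \<le> lam m w c k" using lam_eq[OF k] lam_eq[of "Suc k"] by simp
next
  show "\<exists>K. (\<forall>k>K. lam m w c k = 0) \<and> (\<Sum>k=1..K. lam m w c k) = int (m * n)"
  proof (intro exI conjI allI impI)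
    fix k assume k: "m * n + 1 < k"
    then show "lam m w c k = 0" using lam_eq[of k] sk_big[of k] by simp
  next
    have "(\<Sum>k=1..m * n + 1. lam m w c k) = l_val m w c (m * n + 1) - l_val m w c 0"
      unfolding lam_def by (rule telescope)
    then show "(\<Sum>k=1..m * n + 1. lam m w c k) = int (m * n)" using l0 lK[of "m * n + 1"] by simp
  qed
qed

end

theorem lemma7p1:
  fixes m n :: nat and w c :: "nat list"
  assumes "m \<ge> 1" and "colored_perm m n w c"
  shows "(\<forall>k\<ge>1. kth_largest {(i, j). i < m \<and> j \<ge> 1}
            (\<lambda>(i, j). int m * (int (part (rs_shape (color_word w c i)) j) - int j) + int i)
            k (lam m w c k - int k))
         \<and> is_partition_of (lam m w c) (m * n)"
proof -
  interpret CP m n w c using assms by unfold_locales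
  have "\<forall>k\<ge>1. kth_largest II val k (lam m w c k - int k)" using kth by blast
  then show ?thesis using partition unfolding II_def val_def by blast
qed

end
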